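(* Let $m\ge 2$. Let $H_3$ be the graph with vertices $v_1,\dots,v_7$ whose edges are those of the $7$-cycle $v_1v_2\cdots v_7v_1$ together with $v_2v_5,v_3v_6,v_4v_7$ (it has exactly one vertex of degree $2$, namely $v_1$), and let $H_2$ be the graph with vertices $v_1,\dots,v_6$ and edges $v_1v_2,v_2v_3,v_3v_4,v_4v_5,v_5v_6,v_6v_1,v_2v_5,v_3v_6$ (it has exactly two vertices of degree $2$, namely $v_1,v_4$). Let $G$ be the cubic graph constructed from the path $P_m$ by replacing each leaf with a copy of $H_3$ and each internal vertex with a copy of $H_2$, where each edge $uv$ of $P_m$ is replaced by an edge joining a degree-$2$ vertex of the copy for $u$ to a degree-$2$ vertex of the copy for $v$, each degree-$2$ vertex being used exactly once. Then (a) $G$ is a bridged, Class $2$, triangle-free cubic graph, and (b) $c_2(G)-\left\lceil\frac{|V(G)|+2}{4}\right\rceil=\left\lfloor\frac{m}{2}\right\rfloor-1$.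
   Context: A graph is bridged if it has a bridge. A graph of maximum degree $\Delta$ is Class $1$ if its chromatic index is $\Delta$ and Class $2$ if it is $\Delta+1$. For a graph $G=(V,E)$ and $S_0\subseteq V$, the irreversible $2$-threshold conversion process sets, for $t=1,2,\dots$, $S_t=S_{t-1}\cup\{v: v \text{ has at least } 2 \text{ neighbours in } S_{t-1}\}$; $S_0$ is a $2$-conversion set if $S_t=V$ for some $t$, and $c_2(G)$ is the minimum size of a $2$-conversion set. *)

theory Defs
  imports Complex_Main
begin

definition adj :: "'a set set \<Rightarrow> 'a \<Rightarrow> 'a \<Rightarrow> bool" where
  "adj E u v \<longleftrightarrow> {u, v} \<in> E"

definition simple_graph :: "'a set \<Rightarrow> 'a set set \<Rightarrow> bool" where
  "simple_graph V E \<longleftrightarrow> finite V \<and>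
     (\<forall>e\<in>E. \<exists>u v. e = {u, v} \<and> u \<noteq> v \<and> u \<in> V \<and> v \<in> V)"

definition degree :: "'a set \<Rightarrow> 'a set set \<Rightarrow> 'a \<Rightarrow> nat" where
  "degree V E v = card {u\<in>V. adj E u v}"

definition max_degree :: "'a set \<Rightarrow> 'a set set \<Rightarrow> nat" where
  "max_degree V E = Max (degree V E ` V)"

definition cubic :: "'a set \<Rightarrow> 'a set set \<Rightarrow> bool" where
  "cubic V E \<longleftrightarrow> (\<forall>v\<in>V. degree V E v = 3)"

definition triangle_free :: "'a set set \<Rightarrow> bool" where
  "triangle_free E \<longleftrightarrow> \<not> (\<exists>u v w. adj E u v \<and> adj E v w \<and> adj E u w)"

text \<open>A bridge is an edge whose removal disconnects its two endpoints
  (equivalently, increases the number of connected components).\<close>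
definition is_bridge :: "'a set set \<Rightarrow> 'a set \<Rightarrow> bool" where
  "is_bridge E e \<longleftrightarrow> e \<in> E \<and>
     (\<exists>u v. e = {u, v} \<and> \<not> (adj (E - {e}))\<^sup>*\<^sup>* u v)"

definition bridged :: "'a set set \<Rightarrow> bool" where
  "bridged E \<longleftrightarrow> (\<exists>e. is_bridge E e)"

definition proper_edge_colouring :: "'a set set \<Rightarrow> nat \<Rightarrow> ('a set \<Rightarrow> nat) \<Rightarrow> bool" where
  "proper_edge_colouring E k f \<longleftrightarrow> (\<forall>e\<in>E. f e < k) \<and>
     (\<forall>e1\<in>E. \<forall>e2\<in>E. e1 \<noteq> e2 \<and> e1 \<inter> e2 \<noteq> {} \<longrightarrow> f e1 \<noteq> f e2)"

definition chromatic_index :: "'a set set \<Rightarrow> nat" where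
  "chromatic_index E = (LEAST k. \<exists>f. proper_edge_colouring E k f)"

definition class1 :: "'a set \<Rightarrow> 'a set set \<Rightarrow> bool" where
  "class1 V E \<longleftrightarrow> chromatic_index E = max_degree V E"

definition class2 :: "'a set \<Rightarrow> 'a set set \<Rightarrow> bool" where
  "class2 V E \<longleftrightarrow> chromatic_index E = max_degree V E + 1"

definition conv_step :: "'a set \<Rightarrow> 'a set set \<Rightarrow> 'a set \<Rightarrow> 'a set" where
  "conv_step V E S = S \<union> {v\<in>V. 2 \<le> card {u\<in>S. adj E u v}}"

definition conv_seq :: "'a set \<Rightarrow> 'a set set \<Rightarrow> 'a set \<Rightarrow> nat \<Rightarrow> 'a set" where
  "conv_seq V E S0 t = (conv_step V E ^^ t) S0"

definition is_2_conversion_set :: "'a set \<Rightarrow> 'a set set \<Rightarrow> 'a set \<Rightarrow> bool" where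
  "is_2_conversion_set V E S0 \<longleftrightarrow> S0 \<subseteq> V \<and> (\<exists>t. conv_seq V E S0 t = V)"

definition c2 :: "'a set \<Rightarrow> 'a set set \<Rightarrow> nat" where
  "c2 V E = (LEAST n. \<exists>S. is_2_conversion_set V E S \<and> card S = n)"

text \<open>Copy i (0 \<le> i < m) replaces the i-th vertex of P_m. Leaves (i = 0, i = m-1)
  are copies of H3 on local vertices 1..7; internal vertices are copies of H2 on
  local vertices 1..6.\<close>

definition copy_size :: "nat \<Rightarrow> nat \<Rightarrow> nat" where
  "copy_size m i = (if i = 0 \<or> i = m - 1 then 7 else 6)"

text \<open>local_edges 7 = edges of H3, local_edges 6 = edges of H2.\<close>
definition local_edges :: "nat \<Rightarrow> nat set set" where
  "local_edges n = {{j, j mod n + 1} | j. 1 \<le> j \<and> j \<le> n} \<union>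
     (if n = 7 then {{2,5},{3,6},{4,7}} else {{2,5},{3,6}})"

text \<open>Degree-2 vertex of copy i used for the edge to copy i+1: v1 if copy i is the
  leaf 0 (H3), otherwise v4 (H2). The edge to copy i-1 always uses v1.\<close>
definition next_port :: "nat \<Rightarrow> nat" where
  "next_port i = (if i = 0 then 1 else 4)"

definition GV :: "nat \<Rightarrow> (nat \<times> nat) set" where
  "GV m = {(i, j). i < m \<and> 1 \<le> j \<and> j \<le> copy_size m i}"

definition GE :: "nat \<Rightarrow> (nat \<times> nat) set set" where
  "GE m = {{(i, a), (i, b)} | i a b. i < m \<and> {a, b} \<in> local_edges (copy_size m i)}
        \<union> {{(i, next_port i), (Suc i, 1)} | i. Suc i < m}"

end

theory Submission
  imports Defs
begin
lemma ex7: "(\<exists>j::nat. P j \<and> 1\<le>j \<and> j\<le>7) \<longleftrightarrow> P 1 \<or> P 2 \<or> P 3 \<or> P 4 \<or> P 5 \<or> P 6 \<or> P 7"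
proof
  assume "\<exists>j::nat. P j \<and> 1\<le>j \<and> j\<le>7"
  then obtain j::nat where "1\<le>j" "j\<le>7" "P j" by blast
  moreover have "j = 1 \<or> j = 2 \<or> j = 3 \<or> j = 4 \<or> j = 5 \<or> j = 6 \<or> j = 7" using calculation by linarith
  ultimately show "P 1 \<or> P 2 \<or> P 3 \<or> P 4 \<or> P 5 \<or> P 6 \<or> P 7" by blast
qed auto
lemma ex6: "(\<exists>j::nat. P j \<and> 1\<le>j \<and> j\<le>6) \<longleftrightarrow> P 1 \<or> P 2 \<or> P 3 \<or> P 4 \<or> P 5 \<or> P 6"
proof
  assume "\<exists>j::nat. P j \<and> 1\<le>j \<and> j\<le>6"
  then obtain j::nat where "1\<le>j" "j\<le>6" "P j" by blast
  moreover have "j = 1 \<or> j = 2 \<or> j = 3 \<or> j = 4 \<or> j = 5 \<or> j = 6" using calculation by linarith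
  ultimately show "P 1 \<or> P 2 \<or> P 3 \<or> P 4 \<or> P 5 \<or> P 6" by blast
qed auto

definition L7 :: "(nat \<times> nat) set" where
 "L7 = {(1,2),(2,1),(2,3),(3,2),(3,4),(4,3),(4,5),(5,4),(5,6),(6,5),(6,7),(7,6),(7,1),(1,7),(2,5),(5,2),(3,6),(6,3),(4,7),(7,4)}"
definition L6 :: "(nat \<times> nat) set" where
 "L6 = {(1,2),(2,1),(2,3),(3,2),(3,4),(4,3),(4,5),(5,4),(5,6),(6,5),(6,1),(1,6),(2,5),(5,2),(3,6),(6,3)}"

lemma mods: "(1::nat) mod 7 + 1 = 2" "(2::nat) mod 7 + 1 = 3" "(3::nat) mod 7 + 1 = 4" "(4::nat) mod 7 + 1 = 5"
  "(5::nat) mod 7 + 1 = 6" "(6::nat) mod 7 + 1 = 7" "(7::nat) mod 7 + 1 = 1"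
  "(1::nat) mod 6 + 1 = 2" "(2::nat) mod 6 + 1 = 3" "(3::nat) mod 6 + 1 = 4" "(4::nat) mod 6 + 1 = 5"
  "(5::nat) mod 6 + 1 = 6" "(6::nat) mod 6 + 1 = 1"
  by simp_all

lemma LE7u: "local_edges 7 = {{j, j mod 7 + 1} | j. 1 \<le> j \<and> j \<le> 7} \<union> {{2,5},{3,6},{4,7}}"
  unfolding local_edges_def by (simp only: if_P[OF refl])
lemma LE6u: "local_edges 6 = {{j, j mod 6 + 1} | j. 1 \<le> j \<and> j \<le> 6} \<union> {{2,5},{3,6}}"
proof -
  have "(6::nat) \<noteq> 7" by simp
  then show ?thesis unfolding local_edges_def by (simp only: if_not_P if_False)
qed

lemma LE7: "{a,b} \<in> local_edges 7 \<longleftrightarrow> (a,b) \<in> L7"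
  unfolding LE7u L7_def apply (simp only: Un_iff mem_Collect_eq)
  apply (simp only: ex7 mods doubleton_eq_iff insert_iff prod.inject empty_iff disj_assoc)
  done
lemma LE6: "{a,b} \<in> local_edges 6 \<longleftrightarrow> (a,b) \<in> L6"
  unfolding LE6u L6_def apply (simp only: Un_iff mem_Collect_eq)
  apply (simp only: ex6 mods doubleton_eq_iff insert_iff prod.inject empty_iff disj_assoc)
  done

lemma adj_GE: "adj (GE m) (i,a) (k,b) \<longleftrightarrow>
   (i = k \<and> i < m \<and> {a,b} \<in> local_edges (copy_size m i)) \<or>
   (k = Suc i \<and> Suc i < m \<and> a = next_port i \<and> b = 1) \<or>
   (i = Suc k \<and> Suc k < m \<and> b = next_port k \<and> a = 1)" (is "?L \<longleftrightarrow> ?R")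
proof
  assume ?L
  then consider (A) i' x y where "{(i,a),(k,b)} = {(i',x),(i',y)}" "i' < m" "{x,y} \<in> local_edges (copy_size m i')"
    | (B) i' where "{(i,a),(k,b)} = {(i',next_port i'),(Suc i',1)}" "Suc i' < m"
    unfolding adj_def GE_def by blast
  then show ?R
  proof cases
    case A
    have m1: "(i,a) \<in> {(i',x),(i',y)}" "(k,b) \<in> {(i',x),(i',y)}" unfolding A(1)[symmetric] by simp_all
    have m2: "(i',x) \<in> {(i,a),(k,b)}" "(i',y) \<in> {(i,a),(k,b)}" unfolding A(1) by simp_all
    have ii: "i = i'" "k = i'" using m1 by auto
    have "{a,b} = {x,y}" using A(1) unfolding ii by (simp add: doubleton_eq_iff)
    then show ?thesis using A ii by auto
  next
    case B
    then have "(i = i' \<and> a = next_port i' \<and> k = Suc i' \<and> b = 1) \<or> (i = Suc i' \<and> a = 1 \<and> k = i' \<and> b = next_port i')"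
      by (simp add: doubleton_eq_iff)
    then show ?thesis using B(2) by auto
  qed
next
  assume ?R
  then show ?L unfolding adj_def GE_def
  proof (elim disjE conjE)
    assume "i = k" "i < m" "{a, b} \<in> local_edges (copy_size m i)"
    then show "{(i, a), (k, b)} \<in> {{(i, a), (i, b)} |i a b. i < m \<and> {a, b} \<in> local_edges (copy_size m i)} \<union>
      {{(i, next_port i), (Suc i, 1)} |i. Suc i < m}" by blast
  next
    assume "k = Suc i" "Suc i < m" "a = next_port i" "b = 1"
    then show "{(i, a), (k, b)} \<in> {{(i, a), (i, b)} |i a b. i < m \<and> {a, b} \<in> local_edges (copy_size m i)} \<union>
      {{(i, next_port i), (Suc i, 1)} |i. Suc i < m}" by blast
  next
    assume "i = Suc k" "Suc k < m" "b = next_port k" "a = 1"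
    then have "{(i, a), (k, b)} = {(k, next_port k), (Suc k, 1)}" by auto
    then show "{(i, a), (k, b)} \<in> {{(i, a), (i, b)} |i a b. i < m \<and> {a, b} \<in> local_edges (copy_size m i)} \<union>
      {{(i, next_port i), (Suc i, 1)} |i. Suc i < m}" using \<open>Suc k < m\<close> by blast
  qed
qed


lemma cs0: "2 \<le> m \<Longrightarrow> copy_size m 0 = 7" by (simp add: copy_size_def)
lemma csl: "2 \<le> m \<Longrightarrow> copy_size m (m-1) = 7" by (simp add: copy_size_def)
lemma csi: "0 < i \<Longrightarrow> i < m - 1 \<Longrightarrow> copy_size m i = 6" by (simp add: copy_size_def)

lemma GV_mem: "(k,b) \<in> GV m \<longleftrightarrow> k < m \<and> 1 \<le> b \<and> b \<le> copy_size m k"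
  by (simp add: GV_def)

lemma nb0_1: assumes "2 \<le> m" shows "{u\<in>GV m. adj (GE m) u (0,1)} = {(0,2),(0,7),(1,1)}"
  apply (rule set_eqI) apply (case_tac x)
  using assms by (auto simp: adj_GE GV_mem LE7 LE6 L7_def L6_def next_port_def copy_size_def)

lemma nb0_2: assumes "2 \<le> m" shows "{u\<in>GV m. adj (GE m) u (0,2)} = {(0,1),(0,3),(0,5)}"
  apply (rule set_eqI) apply (case_tac x)
  using assms by (auto simp: adj_GE GV_mem LE7 LE6 L7_def L6_def next_port_def copy_size_def)

lemma nb0_3: assumes "2 \<le> m" shows "{u\<in>GV m. adj (GE m) u (0,3)} = {(0,2),(0,4),(0,6)}"
  apply (rule set_eqI) apply (case_tac x)
  using assms by (auto simp: adj_GE GV_mem LE7 LE6 L7_def L6_def next_port_def copy_size_def)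

lemma nb0_4: assumes "2 \<le> m" shows "{u\<in>GV m. adj (GE m) u (0,4)} = {(0,3),(0,5),(0,7)}"
  apply (rule set_eqI) apply (case_tac x)
  using assms by (auto simp: adj_GE GV_mem LE7 LE6 L7_def L6_def next_port_def copy_size_def)

lemma nb0_5: assumes "2 \<le> m" shows "{u\<in>GV m. adj (GE m) u (0,5)} = {(0,4),(0,6),(0,2)}"
  apply (rule set_eqI) apply (case_tac x)
  using assms by (auto simp: adj_GE GV_mem LE7 LE6 L7_def L6_def next_port_def copy_size_def)

lemma nb0_6: assumes "2 \<le> m" shows "{u\<in>GV m. adj (GE m) u (0,6)} = {(0,5),(0,7),(0,3)}"
  apply (rule set_eqI) apply (case_tac x)
  using assms by (auto simp: adj_GE GV_mem LE7 LE6 L7_def L6_def next_port_def copy_size_def)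

lemma nb0_7: assumes "2 \<le> m" shows "{u\<in>GV m. adj (GE m) u (0,7)} = {(0,6),(0,1),(0,4)}"
  apply (rule set_eqI) apply (case_tac x)
  using assms by (auto simp: adj_GE GV_mem LE7 LE6 L7_def L6_def next_port_def copy_size_def)

lemma nbl_1: assumes "2 \<le> m" shows "{u\<in>GV m. adj (GE m) u (m-1,1)} = {(m-1,2),(m-1,7),(m-2,next_port (m-2))}"
  apply (rule set_eqI) apply (case_tac x)
  using assms by (auto simp: adj_GE GV_mem LE7 LE6 L7_def L6_def next_port_def copy_size_def)

lemma nbl_2: assumes "2 \<le> m" shows "{u\<in>GV m. adj (GE m) u (m-1,2)} = {(m-1,1),(m-1,3),(m-1,5)}"
  apply (rule set_eqI) apply (case_tac x)
  using assms by (auto simp: adj_GE GV_mem LE7 LE6 L7_def L6_def next_port_def copy_size_def)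

lemma nbl_3: assumes "2 \<le> m" shows "{u\<in>GV m. adj (GE m) u (m-1,3)} = {(m-1,2),(m-1,4),(m-1,6)}"
  apply (rule set_eqI) apply (case_tac x)
  using assms by (auto simp: adj_GE GV_mem LE7 LE6 L7_def L6_def next_port_def copy_size_def)

lemma nbl_4: assumes "2 \<le> m" shows "{u\<in>GV m. adj (GE m) u (m-1,4)} = {(m-1,3),(m-1,5),(m-1,7)}"
  apply (rule set_eqI) apply (case_tac x)
  using assms by (auto simp: adj_GE GV_mem LE7 LE6 L7_def L6_def next_port_def copy_size_def)

lemma nbl_5: assumes "2 \<le> m" shows "{u\<in>GV m. adj (GE m) u (m-1,5)} = {(m-1,4),(m-1,6),(m-1,2)}"
  apply (rule set_eqI) apply (case_tac x)
  using assms by (auto simp: adj_GE GV_mem LE7 LE6 L7_def L6_def next_port_def copy_size_def)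

lemma nbl_6: assumes "2 \<le> m" shows "{u\<in>GV m. adj (GE m) u (m-1,6)} = {(m-1,5),(m-1,7),(m-1,3)}"
  apply (rule set_eqI) apply (case_tac x)
  using assms by (auto simp: adj_GE GV_mem LE7 LE6 L7_def L6_def next_port_def copy_size_def)

lemma nbl_7: assumes "2 \<le> m" shows "{u\<in>GV m. adj (GE m) u (m-1,7)} = {(m-1,6),(m-1,1),(m-1,4)}"
  apply (rule set_eqI) apply (case_tac x)
  using assms by (auto simp: adj_GE GV_mem LE7 LE6 L7_def L6_def next_port_def copy_size_def)

lemma nbi_1: assumes "0 < i" "i < m - 1" shows "{u\<in>GV m. adj (GE m) u (i,1)} = {(i,2),(i,6),(i-1,next_port (i-1))}"
  apply (rule set_eqI) apply (case_tac x)
  using assms by (auto simp: adj_GE GV_mem LE7 LE6 L7_def L6_def next_port_def copy_size_def)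

lemma nbi_2: assumes "0 < i" "i < m - 1" shows "{u\<in>GV m. adj (GE m) u (i,2)} = {(i,1),(i,3),(i,5)}"
  apply (rule set_eqI) apply (case_tac x)
  using assms by (auto simp: adj_GE GV_mem LE7 LE6 L7_def L6_def next_port_def copy_size_def)

lemma nbi_3: assumes "0 < i" "i < m - 1" shows "{u\<in>GV m. adj (GE m) u (i,3)} = {(i,2),(i,4),(i,6)}"
  apply (rule set_eqI) apply (case_tac x)
  using assms by (auto simp: adj_GE GV_mem LE7 LE6 L7_def L6_def next_port_def copy_size_def)

lemma nbi_4: assumes "0 < i" "i < m - 1" shows "{u\<in>GV m. adj (GE m) u (i,4)} = {(i,3),(i,5),(Suc i,1)}"
  apply (rule set_eqI) apply (case_tac x)
  using assms by (auto simp: adj_GE GV_mem LE7 LE6 L7_def L6_def next_port_def copy_size_def)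

lemma nbi_5: assumes "0 < i" "i < m - 1" shows "{u\<in>GV m. adj (GE m) u (i,5)} = {(i,4),(i,6),(i,2)}"
  apply (rule set_eqI) apply (case_tac x)
  using assms by (auto simp: adj_GE GV_mem LE7 LE6 L7_def L6_def next_port_def copy_size_def)

lemma nbi_6: assumes "0 < i" "i < m - 1" shows "{u\<in>GV m. adj (GE m) u (i,6)} = {(i,5),(i,1),(i,3)}"
  apply (rule set_eqI) apply (case_tac x)
  using assms by (auto simp: adj_GE GV_mem LE7 LE6 L7_def L6_def next_port_def copy_size_def)


lemma adj_sym: "adj E u v = adj E v u" by (simp add: adj_def insert_commute)

lemma L7_range: "(a,b) \<in> L7 \<Longrightarrow> 1 \<le> a \<and> a \<le> 7 \<and> 1 \<le> b \<and> b \<le> 7 \<and> a \<noteq> b"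
  unfolding L7_def by auto
lemma L6_range: "(a,b) \<in> L6 \<Longrightarrow> 1 \<le> a \<and> a \<le> 6 \<and> 1 \<le> b \<and> b \<le> 6 \<and> a \<noteq> b"
  unfolding L6_def by auto

lemma cs_cases: "copy_size m i = 7 \<or> copy_size m i = 6" by (simp add: copy_size_def)

lemma local_range: "{a,b} \<in> local_edges (copy_size m i) \<Longrightarrow> 1 \<le> a \<and> a \<le> copy_size m i \<and> 1 \<le> b \<and> b \<le> copy_size m i \<and> a \<noteq> b"
  using cs_cases[of m i] LE7 LE6 L7_range L6_range by metis

lemma np_le: "Suc i < m \<Longrightarrow> 1 \<le> next_port i \<and> next_port i \<le> copy_size m i"
  by (auto simp: next_port_def copy_size_def)

lemma adj_GV: assumes "adj (GE m) u v" shows "u \<in> GV m" "v \<in> GV m" "u \<noteq> v"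
proof -
  obtain i a k b where u: "u = (i,a)" and v: "v = (k,b)" by (cases u, cases v) 
  have "u \<in> GV m \<and> v \<in> GV m \<and> u \<noteq> v"
    using assms unfolding u v adj_GE
  proof (elim disjE conjE)
    assume "i = k" "i < m" "{a, b} \<in> local_edges (copy_size m i)"
    then show "(i, a) \<in> GV m \<and> (k, b) \<in> GV m \<and> (i, a) \<noteq> (k, b)"
      using local_range[of a b m i] by (simp add: GV_mem)
  next
    assume "k = Suc i" "Suc i < m" "a = next_port i" "b = 1"
    then show "(i, a) \<in> GV m \<and> (k, b) \<in> GV m \<and> (i, a) \<noteq> (k, b)"
      using np_le[of i m] by (simp add: GV_mem copy_size_def)
  next
    assume "i = Suc k" "Suc k < m" "b = next_port k" "a = 1"
    then show "(i, a) \<in> GV m \<and> (k, b) \<in> GV m \<and> (i, a) \<noteq> (k, b)"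
      using np_le[of k m] by (simp add: GV_mem copy_size_def)
  qed
  then show "u \<in> GV m" "v \<in> GV m" "u \<noteq> v" by auto
qed


lemma single_LE: "{a} \<notin> local_edges 7" "{a} \<notin> local_edges 6"
  using LE7[of a a] LE6[of a a] L7_range[of a a] L6_range[of a a] by auto

lemma j7: "1 \<le> (j::nat) \<Longrightarrow> j \<le> 7 \<Longrightarrow> j=1 \<or> j=2 \<or> j=3 \<or> j=4 \<or> j=5 \<or> j=6 \<or> j=7" by auto
lemma j6: "1 \<le> (j::nat) \<Longrightarrow> j \<le> 6 \<Longrightarrow> j=1 \<or> j=2 \<or> j=3 \<or> j=4 \<or> j=5 \<or> j=6" by auto

lemma vertex_all:
  assumes m: "2 \<le> m" and v: "(i,j) \<in> GV m"
  and p: "P 0 1" "P 0 2" "P 0 3" "P 0 4" "P 0 5" "P 0 6" "P 0 7" "P (m-1) 1" "P (m-1) 2" "P (m-1) 3" "P (m-1) 4" "P (m-1) 5" "P (m-1) 6" "P (m-1) 7" "\<And>i. 0 < i \<Longrightarrow> i < m - 1 \<Longrightarrow> P i 1" "\<And>i. 0 < i \<Longrightarrow> i < m - 1 \<Longrightarrow> P i 2" "\<And>i. 0 < i \<Longrightarrow> i < m - 1 \<Longrightarrow> P i 3" "\<And>i. 0 < i \<Longrightarrow> i < m - 1 \<Longrightarrow> P i 4" "\<And>i. 0 < i \<Longrightarrow> i < m - 1 \<Longrightarrow> P i 5" "\<And>i. 0 < i \<Longrightarrow> i < m - 1 \<Longrightarrow> P i 6"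
  shows "P i j"
proof -
  have i: "i < m" "1 \<le> j" "j \<le> copy_size m i" using v by (auto simp: GV_mem)
  show ?thesis
  proof (cases "i = 0")
    case True
    then have "j \<le> 7" using i cs0[OF m] by simp
    then show ?thesis using j7[OF i(2)] p(1-7) True by auto
  next
    case F1: False
    show ?thesis
    proof (cases "i = m - 1")
      case True
      then have "j \<le> 7" using i csl[OF m] by simp
      then show ?thesis using j7[OF i(2)] p(8-14) True by auto
    next
      case False
      then have ii: "0 < i" "i < m - 1" using F1 i by auto
      then have "j \<le> 6" using i csi by simp
      then show ?thesis using j6[OF i(2)] p(15-20)[OF ii] by auto
    qed
  qed
qed

lemma card0_1: assumes "2 \<le> m" shows "card {u\<in>GV m. adj (GE m) u (0,1)} = 3"
  unfolding nb0_1[OF assms] using assms by (auto simp: next_port_def)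

lemma tri0_1: assumes "2 \<le> m" shows "\<forall>u\<in>{u\<in>GV m. adj (GE m) u (0,1)}. \<forall>w\<in>{u\<in>GV m. adj (GE m) u (0,1)}. \<not> adj (GE m) u w"
  unfolding nb0_1[OF assms] using assms by (auto simp: adj_GE LE7 LE6 L7_def L6_def next_port_def copy_size_def single_LE)

lemma card0_2: assumes "2 \<le> m" shows "card {u\<in>GV m. adj (GE m) u (0,2)} = 3"
  unfolding nb0_2[OF assms] using assms by (auto simp: next_port_def)

lemma tri0_2: assumes "2 \<le> m" shows "\<forall>u\<in>{u\<in>GV m. adj (GE m) u (0,2)}. \<forall>w\<in>{u\<in>GV m. adj (GE m) u (0,2)}. \<not> adj (GE m) u w"
  unfolding nb0_2[OF assms] using assms by (auto simp: adj_GE LE7 LE6 L7_def L6_def next_port_def copy_size_def single_LE)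

lemma card0_3: assumes "2 \<le> m" shows "card {u\<in>GV m. adj (GE m) u (0,3)} = 3"
  unfolding nb0_3[OF assms] using assms by (auto simp: next_port_def)

lemma tri0_3: assumes "2 \<le> m" shows "\<forall>u\<in>{u\<in>GV m. adj (GE m) u (0,3)}. \<forall>w\<in>{u\<in>GV m. adj (GE m) u (0,3)}. \<not> adj (GE m) u w"
  unfolding nb0_3[OF assms] using assms by (auto simp: adj_GE LE7 LE6 L7_def L6_def next_port_def copy_size_def single_LE)

lemma card0_4: assumes "2 \<le> m" shows "card {u\<in>GV m. adj (GE m) u (0,4)} = 3"
  unfolding nb0_4[OF assms] using assms by (auto simp: next_port_def)

lemma tri0_4: assumes "2 \<le> m" shows "\<forall>u\<in>{u\<in>GV m. adj (GE m) u (0,4)}. \<forall>w\<in>{u\<in>GV m. adj (GE m) u (0,4)}. \<not> adj (GE m) u w"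
  unfolding nb0_4[OF assms] using assms by (auto simp: adj_GE LE7 LE6 L7_def L6_def next_port_def copy_size_def single_LE)

lemma card0_5: assumes "2 \<le> m" shows "card {u\<in>GV m. adj (GE m) u (0,5)} = 3"
  unfolding nb0_5[OF assms] using assms by (auto simp: next_port_def)

lemma tri0_5: assumes "2 \<le> m" shows "\<forall>u\<in>{u\<in>GV m. adj (GE m) u (0,5)}. \<forall>w\<in>{u\<in>GV m. adj (GE m) u (0,5)}. \<not> adj (GE m) u w"
  unfolding nb0_5[OF assms] using assms by (auto simp: adj_GE LE7 LE6 L7_def L6_def next_port_def copy_size_def single_LE)

lemma card0_6: assumes "2 \<le> m" shows "card {u\<in>GV m. adj (GE m) u (0,6)} = 3"
  unfolding nb0_6[OF assms] using assms by (auto simp: next_port_def)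

lemma tri0_6: assumes "2 \<le> m" shows "\<forall>u\<in>{u\<in>GV m. adj (GE m) u (0,6)}. \<forall>w\<in>{u\<in>GV m. adj (GE m) u (0,6)}. \<not> adj (GE m) u w"
  unfolding nb0_6[OF assms] using assms by (auto simp: adj_GE LE7 LE6 L7_def L6_def next_port_def copy_size_def single_LE)

lemma card0_7: assumes "2 \<le> m" shows "card {u\<in>GV m. adj (GE m) u (0,7)} = 3"
  unfolding nb0_7[OF assms] using assms by (auto simp: next_port_def)

lemma tri0_7: assumes "2 \<le> m" shows "\<forall>u\<in>{u\<in>GV m. adj (GE m) u (0,7)}. \<forall>w\<in>{u\<in>GV m. adj (GE m) u (0,7)}. \<not> adj (GE m) u w"
  unfolding nb0_7[OF assms] using assms by (auto simp: adj_GE LE7 LE6 L7_def L6_def next_port_def copy_size_def single_LE)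

lemma cardl_1: assumes "2 \<le> m" shows "card {u\<in>GV m. adj (GE m) u (m-1,1)} = 3"
  unfolding nbl_1[OF assms] using assms by (auto simp: next_port_def)

lemma tril_1: assumes "2 \<le> m" shows "\<forall>u\<in>{u\<in>GV m. adj (GE m) u (m-1,1)}. \<forall>w\<in>{u\<in>GV m. adj (GE m) u (m-1,1)}. \<not> adj (GE m) u w"
  unfolding nbl_1[OF assms] using assms by (auto simp: adj_GE LE7 LE6 L7_def L6_def next_port_def copy_size_def single_LE)

lemma cardl_2: assumes "2 \<le> m" shows "card {u\<in>GV m. adj (GE m) u (m-1,2)} = 3"
  unfolding nbl_2[OF assms] using assms by (auto simp: next_port_def)

lemma tril_2: assumes "2 \<le> m" shows "\<forall>u\<in>{u\<in>GV m. adj (GE m) u (m-1,2)}. \<forall>w\<in>{u\<in>GV m. adj (GE m) u (m-1,2)}. \<not> adj (GE m) u w"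
  unfolding nbl_2[OF assms] using assms by (auto simp: adj_GE LE7 LE6 L7_def L6_def next_port_def copy_size_def single_LE)

lemma cardl_3: assumes "2 \<le> m" shows "card {u\<in>GV m. adj (GE m) u (m-1,3)} = 3"
  unfolding nbl_3[OF assms] using assms by (auto simp: next_port_def)

lemma tril_3: assumes "2 \<le> m" shows "\<forall>u\<in>{u\<in>GV m. adj (GE m) u (m-1,3)}. \<forall>w\<in>{u\<in>GV m. adj (GE m) u (m-1,3)}. \<not> adj (GE m) u w"
  unfolding nbl_3[OF assms] using assms by (auto simp: adj_GE LE7 LE6 L7_def L6_def next_port_def copy_size_def single_LE)

lemma cardl_4: assumes "2 \<le> m" shows "card {u\<in>GV m. adj (GE m) u (m-1,4)} = 3"
  unfolding nbl_4[OF assms] using assms by (auto simp: next_port_def)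

lemma tril_4: assumes "2 \<le> m" shows "\<forall>u\<in>{u\<in>GV m. adj (GE m) u (m-1,4)}. \<forall>w\<in>{u\<in>GV m. adj (GE m) u (m-1,4)}. \<not> adj (GE m) u w"
  unfolding nbl_4[OF assms] using assms by (auto simp: adj_GE LE7 LE6 L7_def L6_def next_port_def copy_size_def single_LE)

lemma cardl_5: assumes "2 \<le> m" shows "card {u\<in>GV m. adj (GE m) u (m-1,5)} = 3"
  unfolding nbl_5[OF assms] using assms by (auto simp: next_port_def)

lemma tril_5: assumes "2 \<le> m" shows "\<forall>u\<in>{u\<in>GV m. adj (GE m) u (m-1,5)}. \<forall>w\<in>{u\<in>GV m. adj (GE m) u (m-1,5)}. \<not> adj (GE m) u w"
  unfolding nbl_5[OF assms] using assms by (auto simp: adj_GE LE7 LE6 L7_def L6_def next_port_def copy_size_def single_LE)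

lemma cardl_6: assumes "2 \<le> m" shows "card {u\<in>GV m. adj (GE m) u (m-1,6)} = 3"
  unfolding nbl_6[OF assms] using assms by (auto simp: next_port_def)

lemma tril_6: assumes "2 \<le> m" shows "\<forall>u\<in>{u\<in>GV m. adj (GE m) u (m-1,6)}. \<forall>w\<in>{u\<in>GV m. adj (GE m) u (m-1,6)}. \<not> adj (GE m) u w"
  unfolding nbl_6[OF assms] using assms by (auto simp: adj_GE LE7 LE6 L7_def L6_def next_port_def copy_size_def single_LE)

lemma cardl_7: assumes "2 \<le> m" shows "card {u\<in>GV m. adj (GE m) u (m-1,7)} = 3"
  unfolding nbl_7[OF assms] using assms by (auto simp: next_port_def)

lemma tril_7: assumes "2 \<le> m" shows "\<forall>u\<in>{u\<in>GV m. adj (GE m) u (m-1,7)}. \<forall>w\<in>{u\<in>GV m. adj (GE m) u (m-1,7)}. \<not> adj (GE m) u w"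
  unfolding nbl_7[OF assms] using assms by (auto simp: adj_GE LE7 LE6 L7_def L6_def next_port_def copy_size_def single_LE)

lemma cardi_1: assumes "0 < i" "i < m - 1" shows "card {u\<in>GV m. adj (GE m) u (i,1)} = 3"
  unfolding nbi_1[OF assms] using assms by (auto simp: next_port_def)

lemma trii_1: assumes "0 < i" "i < m - 1" shows "\<forall>u\<in>{u\<in>GV m. adj (GE m) u (i,1)}. \<forall>w\<in>{u\<in>GV m. adj (GE m) u (i,1)}. \<not> adj (GE m) u w"
  unfolding nbi_1[OF assms] using assms by (auto simp: adj_GE LE7 LE6 L7_def L6_def next_port_def copy_size_def single_LE)

lemma cardi_2: assumes "0 < i" "i < m - 1" shows "card {u\<in>GV m. adj (GE m) u (i,2)} = 3"
  unfolding nbi_2[OF assms] using assms by (auto simp: next_port_def)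

lemma trii_2: assumes "0 < i" "i < m - 1" shows "\<forall>u\<in>{u\<in>GV m. adj (GE m) u (i,2)}. \<forall>w\<in>{u\<in>GV m. adj (GE m) u (i,2)}. \<not> adj (GE m) u w"
  unfolding nbi_2[OF assms] using assms by (auto simp: adj_GE LE7 LE6 L7_def L6_def next_port_def copy_size_def single_LE)

lemma cardi_3: assumes "0 < i" "i < m - 1" shows "card {u\<in>GV m. adj (GE m) u (i,3)} = 3"
  unfolding nbi_3[OF assms] using assms by (auto simp: next_port_def)

lemma trii_3: assumes "0 < i" "i < m - 1" shows "\<forall>u\<in>{u\<in>GV m. adj (GE m) u (i,3)}. \<forall>w\<in>{u\<in>GV m. adj (GE m) u (i,3)}. \<not> adj (GE m) u w"
  unfolding nbi_3[OF assms] using assms by (auto simp: adj_GE LE7 LE6 L7_def L6_def next_port_def copy_size_def single_LE)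

lemma cardi_4: assumes "0 < i" "i < m - 1" shows "card {u\<in>GV m. adj (GE m) u (i,4)} = 3"
  unfolding nbi_4[OF assms] using assms by (auto simp: next_port_def)

lemma trii_4: assumes "0 < i" "i < m - 1" shows "\<forall>u\<in>{u\<in>GV m. adj (GE m) u (i,4)}. \<forall>w\<in>{u\<in>GV m. adj (GE m) u (i,4)}. \<not> adj (GE m) u w"
  unfolding nbi_4[OF assms] using assms by (auto simp: adj_GE LE7 LE6 L7_def L6_def next_port_def copy_size_def single_LE)

lemma cardi_5: assumes "0 < i" "i < m - 1" shows "card {u\<in>GV m. adj (GE m) u (i,5)} = 3"
  unfolding nbi_5[OF assms] using assms by (auto simp: next_port_def)

lemma trii_5: assumes "0 < i" "i < m - 1" shows "\<forall>u\<in>{u\<in>GV m. adj (GE m) u (i,5)}. \<forall>w\<in>{u\<in>GV m. adj (GE m) u (i,5)}. \<not> adj (GE m) u w"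
  unfolding nbi_5[OF assms] using assms by (auto simp: adj_GE LE7 LE6 L7_def L6_def next_port_def copy_size_def single_LE)

lemma cardi_6: assumes "0 < i" "i < m - 1" shows "card {u\<in>GV m. adj (GE m) u (i,6)} = 3"
  unfolding nbi_6[OF assms] using assms by (auto simp: next_port_def)

lemma trii_6: assumes "0 < i" "i < m - 1" shows "\<forall>u\<in>{u\<in>GV m. adj (GE m) u (i,6)}. \<forall>w\<in>{u\<in>GV m. adj (GE m) u (i,6)}. \<not> adj (GE m) u w"
  unfolding nbi_6[OF assms] using assms by (auto simp: adj_GE LE7 LE6 L7_def L6_def next_port_def copy_size_def single_LE)

lemma cubic_G: assumes m: "2 \<le> m" shows "cubic (GV m) (GE m)"
  unfolding cubic_def degree_def
proof
  fix v assume v: "v \<in> GV m"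
  obtain i j where ij: "v = (i,j)" by (cases v)
  show "card {u \<in> GV m. adj (GE m) u v} = 3"
    unfolding ij using v unfolding ij
    by (rule vertex_all[where P="\<lambda>i j. card {u \<in> GV m. adj (GE m) u (i,j)} = 3", OF m _ card0_1 card0_2 card0_3 card0_4 card0_5 card0_6 card0_7 cardl_1 cardl_2 cardl_3 cardl_4 cardl_5 cardl_6 cardl_7 cardi_1 cardi_2 cardi_3 cardi_4 cardi_5 cardi_6])
       (simp_all add: m)
qed

lemma tri_free: assumes m: "2 \<le> m" shows "triangle_free (GE m)"
  unfolding triangle_free_def
proof clarify
  fix u v w assume a: "adj (GE m) u v" "adj (GE m) v w" "adj (GE m) u w"
  have vV: "v \<in> GV m" using adj_GV(2)[OF a(1)] .
  have uN: "u \<in> {x\<in>GV m. adj (GE m) x v}" using a(1) adj_GV(1)[OF a(1)] by simp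
  have wN: "w \<in> {x\<in>GV m. adj (GE m) x v}" using a(2) adj_GV(2)[OF a(2)] adj_sym by fastforce
  obtain i j where ij: "v = (i,j)" by (cases v)
  have "\<forall>u\<in>{x\<in>GV m. adj (GE m) x (i,j)}. \<forall>w\<in>{x\<in>GV m. adj (GE m) x (i,j)}. \<not> adj (GE m) u w"
    using vV unfolding ij
    by (rule vertex_all[where P="\<lambda>i j. \<forall>u\<in>{x\<in>GV m. adj (GE m) x (i,j)}. \<forall>w\<in>{x\<in>GV m. adj (GE m) x (i,j)}. \<not> adj (GE m) u w", OF m _ tri0_1 tri0_2 tri0_3 tri0_4 tri0_5 tri0_6 tri0_7 tril_1 tril_2 tril_3 tril_4 tril_5 tril_6 tril_7 trii_1 trii_2 trii_3 trii_4 trii_5 trii_6])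
       (simp_all add: m)
  then show False using uN wN a(3) unfolding ij by blast
qed



lemma GV_Sigma: "GV m = (SIGMA i:{..<m}. {1..copy_size m i})"
  by (auto simp: GV_def)

lemma finite_GV: "finite (GV m)"
  unfolding GV_Sigma by auto

lemma card_GV: assumes m: "2 \<le> m" shows "card (GV m) = 6 * m + 2"
proof -
  have cs: "copy_size m i = 6 + of_bool (i = 0 \<or> i = m - 1)" for i
    by (simp add: copy_size_def)
  have "card (GV m) = (\<Sum>i<m. copy_size m i)" unfolding GV_Sigma by simp
  also have "\<dots> = (\<Sum>i<m. 6 + of_bool (i = 0 \<or> i = m - 1))" using cs by simp
  also have "\<dots> = (\<Sum>i<m. 6) + (\<Sum>i<m. of_bool (i = 0 \<or> i = m - 1))"
    by (rule sum.distrib)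
  also have "(\<Sum>i<m. of_bool (i = 0 \<or> i = m - 1)) = of_nat (card ({..<m} \<inter> {i. i = 0 \<or> i = m - 1}))"
    by (rule sum_of_bool_eq; simp)
  also have "(\<Sum>i<m. (6::nat)) = 6 * m" by simp
  also have "{..<m} \<inter> {i. i = 0 \<or> i = m - 1} = {0, m - 1}" using m by auto
  also have "card {0::nat, m - 1} = 2" using m by simp
  finally show ?thesis by simp
qed

lemma simple_G: "simple_graph (GV m) (GE m)"
  unfolding simple_graph_def
proof (intro conjI ballI)
  show "finite (GV m)" by (rule finite_GV)
next
  fix e assume e: "e \<in> GE m"
  then obtain u v where uv: "e = {u,v}" unfolding GE_def by blast
  then have a: "adj (GE m) u v" using e by (simp add: adj_def)
  show "\<exists>u v. e = {u, v} \<and> u \<noteq> v \<and> u \<in> GV m \<and> v \<in> GV m"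
    using uv adj_GV[OF a] by blast
qed

lemma bridged_G: assumes m: "2 \<le> m" shows "bridged (GE m)"
proof -
  let ?e = "{(0::nat,1::nat),(1,1)}"
  have eE: "?e \<in> GE m" using adj_GE[of m 0 1 1 1] m by (simp add: adj_def next_port_def)
  have step: "fst z = 0" if fy: "fst y = 0" and ay: "adj (GE m - {?e}) y z" for y z
  proof -
    obtain a where y: "y = (0,a)" using fy by (metis prod.collapse)
    obtain k b where z: "z = (k,b)" by (cases z)
    have ne: "{y,z} \<noteq> ?e" and a: "adj (GE m) y z" using ay by (auto simp: adj_def)
    show ?thesis using a ne unfolding y z adj_GE by (auto simp: next_port_def)
  qed
  have "fst y = 0" if "(adj (GE m - {?e}))\<^sup>*\<^sup>* x y" "fst x = 0" for x y
    using that by (induction rule: rtranclp_induct) (auto intro: step)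
  then have "\<not> (adj (GE m - {?e}))\<^sup>*\<^sup>* (0,1) (1,1)" by fastforce
  then have "is_bridge (GE m) ?e" unfolding is_bridge_def using eE by blast
  then show ?thesis unfolding bridged_def by blast
qed

lemma maxdeg_G: assumes m: "2 \<le> m" shows "max_degree (GV m) (GE m) = 3"
proof -
  have ne: "(0,1) \<in> GV m" using m by (simp add: GV_mem copy_size_def)
  have "degree (GV m) (GE m) ` GV m = {3}"
    using cubic_G[OF m] ne unfolding cubic_def by force
  then show ?thesis unfolding max_degree_def by simp
qed


lemma one_of3: "(a::nat) < 3 \<Longrightarrow> b < 3 \<Longrightarrow> c < 3 \<Longrightarrow> d < 3 \<Longrightarrow> a \<noteq> b \<Longrightarrow> a \<noteq> c \<Longrightarrow> b \<noteq> c \<Longrightarrow>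
  of_bool (a = d) + of_bool (b = d) + of_bool (c = d) = (1::nat)"
  by auto

lemma parity: "(a::nat) + b = 1 \<Longrightarrow> a + c + d = 1 \<Longrightarrow> c + e + f = 1 \<Longrightarrow> e + g + h = 1 \<Longrightarrow>
  g + i + d = 1 \<Longrightarrow> i + j + f = 1 \<Longrightarrow> j + b + h = 1 \<Longrightarrow> False"
proof -
  assume "(a::nat) + b = 1" "a + c + d = 1" "c + e + f = 1" "e + g + h = 1" "g + i + d = 1" "i + j + f = 1" "j + b + h = 1"
  then have s: "(a+b)+(a+c+d)+(c+e+f)+(e+g+h)+(g+i+d)+(i+j+f)+(j+b+h) = 7" by simp
  have "(a+b)+(a+c+d)+(c+e+f)+(e+g+h)+(g+i+d)+(i+j+f)+(j+b+h) = 2 * (a+b+c+d+e+f+g+h+i+j)" by simp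
  then have "2 * (a+b+c+d+e+f+g+h+i+j) = 7" using s by simp
  then have "even (7::nat)" by (metis dvd_triv_left)
  then show False by simp
qed

lemma vert3: assumes "proper_edge_colouring E k f" "{u,x} \<in> E" "{u,y} \<in> E" "{u,z} \<in> E"
  "x \<noteq> y" "x \<noteq> z" "y \<noteq> z"
  shows "f {u,x} \<noteq> f {u,y} \<and> f {u,x} \<noteq> f {u,z} \<and> f {u,y} \<noteq> f {u,z}"
proof -
  have d: "{u,v} \<noteq> {u,w}" if "v \<noteq> w" for v w :: 'a using that by (auto simp: doubleton_eq_iff)
  have i: "{u,v} \<inter> {u,w} \<noteq> {}" for v w :: 'a by auto
  show ?thesis using assms(1) unfolding proper_edge_colouring_def
    using assms(2-7) d i by metis
qed

lemma no3: assumes m: "2 \<le> m" shows "\<not> proper_edge_colouring (GE m) 3 f"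
proof
  assume P: "proper_edge_colouring (GE m) 3 f"
  have inE: "{(0,a),(0,b)} \<in> GE m" if "(a,b) \<in> L7" for a b
    using that adj_GE[of m 0 a 0 b] m cs0 LE7 by (simp add: adj_def)
  have bE: "{(0,1),(1,1)} \<in> GE m" using adj_GE[of m 0 1 1 1] m by (simp add: adj_def next_port_def)
  have lt: "f e < 3" if "e \<in> GE m" for e using P that unfolding proper_edge_colouring_def by blast
  note E = inE[unfolded L7_def, simplified] bE bE[simplified]
  have v1: "f {(0,1),(0,2)} \<noteq> f {(0,1),(0,7)} \<and> f {(0,1),(0,2)} \<noteq> f {(0,1),(1,1)} \<and> f {(0,1),(0,7)} \<noteq> f {(0,1),(1,1)}"
    by (rule vert3[OF P]) (simp_all add: E)
  have v2: "f {(0,2),(0,1)} \<noteq> f {(0,2),(0,3)} \<and> f {(0,2),(0,1)} \<noteq> f {(0,2),(0,5)} \<and> f {(0,2),(0,3)} \<noteq> f {(0,2),(0,5)}"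
    by (rule vert3[OF P]) (simp_all add: E)
  have v3: "f {(0,3),(0,2)} \<noteq> f {(0,3),(0,4)} \<and> f {(0,3),(0,2)} \<noteq> f {(0,3),(0,6)} \<and> f {(0,3),(0,4)} \<noteq> f {(0,3),(0,6)}"
    by (rule vert3[OF P]) (simp_all add: E)
  have v4: "f {(0,4),(0,3)} \<noteq> f {(0,4),(0,5)} \<and> f {(0,4),(0,3)} \<noteq> f {(0,4),(0,7)} \<and> f {(0,4),(0,5)} \<noteq> f {(0,4),(0,7)}"
    by (rule vert3[OF P]) (simp_all add: E)
  have v5: "f {(0,5),(0,4)} \<noteq> f {(0,5),(0,6)} \<and> f {(0,5),(0,4)} \<noteq> f {(0,5),(0,2)} \<and> f {(0,5),(0,6)} \<noteq> f {(0,5),(0,2)}"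
    by (rule vert3[OF P]) (simp_all add: E)
  have v6: "f {(0,6),(0,5)} \<noteq> f {(0,6),(0,7)} \<and> f {(0,6),(0,5)} \<noteq> f {(0,6),(0,3)} \<and> f {(0,6),(0,7)} \<noteq> f {(0,6),(0,3)}"
    by (rule vert3[OF P]) (simp_all add: E)
  have v7: "f {(0,7),(0,6)} \<noteq> f {(0,7),(0,1)} \<and> f {(0,7),(0,6)} \<noteq> f {(0,7),(0,4)} \<and> f {(0,7),(0,1)} \<noteq> f {(0,7),(0,4)}"
    by (rule vert3[OF P]) (simp_all add: E)
  define c where "c a b = f {(0::nat,a::nat),(0,b)}" for a b
  have cs: "c a b = c b a" for a b unfolding c_def by (simp add: insert_commute)
  have l: "c a b < 3" if "(a,b) \<in> L7" for a b unfolding c_def using lt inE that by blast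
  note L = l[unfolded L7_def, simplified]
  note V = v1 v2 v3 v4 v5 v6 v7
  note V' = V[folded c_def]
  let ?d = "c 1 2"
  have "of_bool (c 1 2 = ?d) + of_bool (c 1 7 = ?d) = (1::nat)" using V'(1) by simp
  moreover have "of_bool (c 2 1 = ?d) + of_bool (c 2 3 = ?d) + of_bool (c 2 5 = ?d) = (1::nat)"
    by (rule one_of3) (use V' L cs in auto)
  moreover have "of_bool (c 3 2 = ?d) + of_bool (c 3 4 = ?d) + of_bool (c 3 6 = ?d) = (1::nat)"
    by (rule one_of3) (use V' L cs in auto)
  moreover have "of_bool (c 4 3 = ?d) + of_bool (c 4 5 = ?d) + of_bool (c 4 7 = ?d) = (1::nat)"
    by (rule one_of3) (use V' L cs in auto)
  moreover have "of_bool (c 5 4 = ?d) + of_bool (c 5 6 = ?d) + of_bool (c 5 2 = ?d) = (1::nat)"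
    by (rule one_of3) (use V' L cs in auto)
  moreover have "of_bool (c 6 5 = ?d) + of_bool (c 6 7 = ?d) + of_bool (c 6 3 = ?d) = (1::nat)"
    by (rule one_of3) (use V' L cs in auto)
  moreover have "of_bool (c 7 6 = ?d) + of_bool (c 7 1 = ?d) + of_bool (c 7 4 = ?d) = (1::nat)"
    by (rule one_of3) (use V' L cs in auto)
  ultimately show False unfolding cs[of 2 1] cs[of 3 2] cs[of 4 3] cs[of 5 4] cs[of 6 5] cs[of 7 6] cs[of 7 1] cs[of 5 2] cs[of 6 3] cs[of 7 4]
    by (rule parity)
qed

definition tab :: "nat \<Rightarrow> nat \<Rightarrow> nat" where
  "tab lo hi = (if (lo,hi) \<in> {(1,2),(3,4),(5,6)} then 0 else if (lo,hi) \<in> {(2,3),(4,5),(6,7),(1,6)} then 1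
     else if (lo,hi) = (4,7) then 3 else 2)"

definition col :: "(nat \<times> nat) set \<Rightarrow> nat" where
  "col e = (if card (fst ` e) = 1 then tab (Min (snd ` e)) (Max (snd ` e)) else 3)"

lemma col_lt: "col e < 4" unfolding col_def tab_def by auto


lemma pc0_1: assumes "2 \<le> m" shows "\<forall>u\<in>{u\<in>GV m. adj (GE m) u (0,1)}. \<forall>w\<in>{u\<in>GV m. adj (GE m) u (0,1)}. u \<noteq> w \<longrightarrow> col {(0,1),u} \<noteq> col {(0,1),w}"
  unfolding nb0_1[OF assms] using assms by (auto simp: col_def tab_def next_port_def)

lemma pc0_2: assumes "2 \<le> m" shows "\<forall>u\<in>{u\<in>GV m. adj (GE m) u (0,2)}. \<forall>w\<in>{u\<in>GV m. adj (GE m) u (0,2)}. u \<noteq> w \<longrightarrow> col {(0,2),u} \<noteq> col {(0,2),w}"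
  unfolding nb0_2[OF assms] using assms by (auto simp: col_def tab_def next_port_def)

lemma pc0_3: assumes "2 \<le> m" shows "\<forall>u\<in>{u\<in>GV m. adj (GE m) u (0,3)}. \<forall>w\<in>{u\<in>GV m. adj (GE m) u (0,3)}. u \<noteq> w \<longrightarrow> col {(0,3),u} \<noteq> col {(0,3),w}"
  unfolding nb0_3[OF assms] using assms by (auto simp: col_def tab_def next_port_def)

lemma pc0_4: assumes "2 \<le> m" shows "\<forall>u\<in>{u\<in>GV m. adj (GE m) u (0,4)}. \<forall>w\<in>{u\<in>GV m. adj (GE m) u (0,4)}. u \<noteq> w \<longrightarrow> col {(0,4),u} \<noteq> col {(0,4),w}"
  unfolding nb0_4[OF assms] using assms by (auto simp: col_def tab_def next_port_def)

lemma pc0_5: assumes "2 \<le> m" shows "\<forall>u\<in>{u\<in>GV m. adj (GE m) u (0,5)}. \<forall>w\<in>{u\<in>GV m. adj (GE m) u (0,5)}. u \<noteq> w \<longrightarrow> col {(0,5),u} \<noteq> col {(0,5),w}"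
  unfolding nb0_5[OF assms] using assms by (auto simp: col_def tab_def next_port_def)

lemma pc0_6: assumes "2 \<le> m" shows "\<forall>u\<in>{u\<in>GV m. adj (GE m) u (0,6)}. \<forall>w\<in>{u\<in>GV m. adj (GE m) u (0,6)}. u \<noteq> w \<longrightarrow> col {(0,6),u} \<noteq> col {(0,6),w}"
  unfolding nb0_6[OF assms] using assms by (auto simp: col_def tab_def next_port_def)

lemma pc0_7: assumes "2 \<le> m" shows "\<forall>u\<in>{u\<in>GV m. adj (GE m) u (0,7)}. \<forall>w\<in>{u\<in>GV m. adj (GE m) u (0,7)}. u \<noteq> w \<longrightarrow> col {(0,7),u} \<noteq> col {(0,7),w}"
  unfolding nb0_7[OF assms] using assms by (auto simp: col_def tab_def next_port_def)

lemma pcl_1: assumes "2 \<le> m" shows "\<forall>u\<in>{u\<in>GV m. adj (GE m) u (m-1,1)}. \<forall>w\<in>{u\<in>GV m. adj (GE m) u (m-1,1)}. u \<noteq> w \<longrightarrow> col {(m-1,1),u} \<noteq> col {(m-1,1),w}"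
  unfolding nbl_1[OF assms] using assms by (auto simp: col_def tab_def next_port_def)

lemma pcl_2: assumes "2 \<le> m" shows "\<forall>u\<in>{u\<in>GV m. adj (GE m) u (m-1,2)}. \<forall>w\<in>{u\<in>GV m. adj (GE m) u (m-1,2)}. u \<noteq> w \<longrightarrow> col {(m-1,2),u} \<noteq> col {(m-1,2),w}"
  unfolding nbl_2[OF assms] using assms by (auto simp: col_def tab_def next_port_def)

lemma pcl_3: assumes "2 \<le> m" shows "\<forall>u\<in>{u\<in>GV m. adj (GE m) u (m-1,3)}. \<forall>w\<in>{u\<in>GV m. adj (GE m) u (m-1,3)}. u \<noteq> w \<longrightarrow> col {(m-1,3),u} \<noteq> col {(m-1,3),w}"
  unfolding nbl_3[OF assms] using assms by (auto simp: col_def tab_def next_port_def)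

lemma pcl_4: assumes "2 \<le> m" shows "\<forall>u\<in>{u\<in>GV m. adj (GE m) u (m-1,4)}. \<forall>w\<in>{u\<in>GV m. adj (GE m) u (m-1,4)}. u \<noteq> w \<longrightarrow> col {(m-1,4),u} \<noteq> col {(m-1,4),w}"
  unfolding nbl_4[OF assms] using assms by (auto simp: col_def tab_def next_port_def)

lemma pcl_5: assumes "2 \<le> m" shows "\<forall>u\<in>{u\<in>GV m. adj (GE m) u (m-1,5)}. \<forall>w\<in>{u\<in>GV m. adj (GE m) u (m-1,5)}. u \<noteq> w \<longrightarrow> col {(m-1,5),u} \<noteq> col {(m-1,5),w}"
  unfolding nbl_5[OF assms] using assms by (auto simp: col_def tab_def next_port_def)

lemma pcl_6: assumes "2 \<le> m" shows "\<forall>u\<in>{u\<in>GV m. adj (GE m) u (m-1,6)}. \<forall>w\<in>{u\<in>GV m. adj (GE m) u (m-1,6)}. u \<noteq> w \<longrightarrow> col {(m-1,6),u} \<noteq> col {(m-1,6),w}"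
  unfolding nbl_6[OF assms] using assms by (auto simp: col_def tab_def next_port_def)

lemma pcl_7: assumes "2 \<le> m" shows "\<forall>u\<in>{u\<in>GV m. adj (GE m) u (m-1,7)}. \<forall>w\<in>{u\<in>GV m. adj (GE m) u (m-1,7)}. u \<noteq> w \<longrightarrow> col {(m-1,7),u} \<noteq> col {(m-1,7),w}"
  unfolding nbl_7[OF assms] using assms by (auto simp: col_def tab_def next_port_def)

lemma pci_1: assumes "0 < i" "i < m - 1" shows "\<forall>u\<in>{u\<in>GV m. adj (GE m) u (i,1)}. \<forall>w\<in>{u\<in>GV m. adj (GE m) u (i,1)}. u \<noteq> w \<longrightarrow> col {(i,1),u} \<noteq> col {(i,1),w}"
  unfolding nbi_1[OF assms] using assms by (auto simp: col_def tab_def next_port_def)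

lemma pci_2: assumes "0 < i" "i < m - 1" shows "\<forall>u\<in>{u\<in>GV m. adj (GE m) u (i,2)}. \<forall>w\<in>{u\<in>GV m. adj (GE m) u (i,2)}. u \<noteq> w \<longrightarrow> col {(i,2),u} \<noteq> col {(i,2),w}"
  unfolding nbi_2[OF assms] using assms by (auto simp: col_def tab_def next_port_def)

lemma pci_3: assumes "0 < i" "i < m - 1" shows "\<forall>u\<in>{u\<in>GV m. adj (GE m) u (i,3)}. \<forall>w\<in>{u\<in>GV m. adj (GE m) u (i,3)}. u \<noteq> w \<longrightarrow> col {(i,3),u} \<noteq> col {(i,3),w}"
  unfolding nbi_3[OF assms] using assms by (auto simp: col_def tab_def next_port_def)

lemma pci_4: assumes "0 < i" "i < m - 1" shows "\<forall>u\<in>{u\<in>GV m. adj (GE m) u (i,4)}. \<forall>w\<in>{u\<in>GV m. adj (GE m) u (i,4)}. u \<noteq> w \<longrightarrow> col {(i,4),u} \<noteq> col {(i,4),w}"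
  unfolding nbi_4[OF assms] using assms by (auto simp: col_def tab_def next_port_def)

lemma pci_5: assumes "0 < i" "i < m - 1" shows "\<forall>u\<in>{u\<in>GV m. adj (GE m) u (i,5)}. \<forall>w\<in>{u\<in>GV m. adj (GE m) u (i,5)}. u \<noteq> w \<longrightarrow> col {(i,5),u} \<noteq> col {(i,5),w}"
  unfolding nbi_5[OF assms] using assms by (auto simp: col_def tab_def next_port_def)

lemma pci_6: assumes "0 < i" "i < m - 1" shows "\<forall>u\<in>{u\<in>GV m. adj (GE m) u (i,6)}. \<forall>w\<in>{u\<in>GV m. adj (GE m) u (i,6)}. u \<noteq> w \<longrightarrow> col {(i,6),u} \<noteq> col {(i,6),w}"
  unfolding nbi_6[OF assms] using assms by (auto simp: col_def tab_def next_port_def)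

lemma col_proper: assumes m: "2 \<le> m" shows "proper_edge_colouring (GE m) 4 col"
  unfolding proper_edge_colouring_def
proof (intro conjI ballI impI)
  fix e assume "e \<in> GE m" show "col e < 4" by (rule col_lt)
next
  fix e1 e2 assume e1: "e1 \<in> GE m" and e2: "e2 \<in> GE m" and ne: "e1 \<noteq> e2 \<and> e1 \<inter> e2 \<noteq> {}"
  obtain v where v: "v \<in> e1" "v \<in> e2" using ne by blast
  have dec: "\<exists>u. e = {v,u}" if eE: "e \<in> GE m" and ve: "v \<in> e" for e
  proof -
    obtain p q where "e = {p,q}" using eE unfolding GE_def by blast
    then show ?thesis using ve by (metis insert_commute insert_iff singletonD)
  qed
  obtain u1 where u1: "e1 = {v,u1}" using dec e1 v by blast
  obtain u2 where u2: "e2 = {v,u2}" using dec e2 v by blast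
  have a1: "adj (GE m) u1 v" using e1 u1 by (simp add: adj_def insert_commute)
  have a2: "adj (GE m) u2 v" using e2 u2 by (simp add: adj_def insert_commute)
  have vV: "v \<in> GV m" using adj_GV(2)[OF a1] .
  have N1: "u1 \<in> {x\<in>GV m. adj (GE m) x v}" using a1 adj_GV(1)[OF a1] by simp
  have N2: "u2 \<in> {x\<in>GV m. adj (GE m) x v}" using a2 adj_GV(1)[OF a2] by simp
  have d: "u1 \<noteq> u2" using ne u1 u2 by auto
  obtain i j where ij: "v = (i,j)" by (cases v)
  have "\<forall>u\<in>{x\<in>GV m. adj (GE m) x (i,j)}. \<forall>w\<in>{x\<in>GV m. adj (GE m) x (i,j)}. u \<noteq> w \<longrightarrow> col {(i,j),u} \<noteq> col {(i,j),w}"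
    using vV unfolding ij
    by (rule vertex_all[where P="\<lambda>i j. \<forall>u\<in>{x\<in>GV m. adj (GE m) x (i,j)}. \<forall>w\<in>{x\<in>GV m. adj (GE m) x (i,j)}. u \<noteq> w \<longrightarrow> col {(i,j),u} \<noteq> col {(i,j),w}", OF m _ pc0_1 pc0_2 pc0_3 pc0_4 pc0_5 pc0_6 pc0_7 pcl_1 pcl_2 pcl_3 pcl_4 pcl_5 pcl_6 pcl_7 pci_1 pci_2 pci_3 pci_4 pci_5 pci_6])
       (simp_all add: m)
  then show "col e1 \<noteq> col e2" using N1 N2 d unfolding u1 u2 ij by blast
qed

lemma class2_G: assumes m: "2 \<le> m" shows "class2 (GV m) (GE m)"
proof -
  have "chromatic_index (GE m) = 4"
    unfolding chromatic_index_def
  proof (rule Least_equality)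
    show "\<exists>f. proper_edge_colouring (GE m) 4 f" using col_proper[OF m] by blast
  next
    fix k assume "\<exists>f. proper_edge_colouring (GE m) k f"
    then obtain f where f: "proper_edge_colouring (GE m) k f" by blast
    show "4 \<le> k"
    proof (rule ccontr)
      assume "\<not> 4 \<le> k"
      then have "proper_edge_colouring (GE m) 3 f" using f unfolding proper_edge_colouring_def by force
      then show False using no3[OF m] by blast
    qed
  qed
  then show ?thesis unfolding class2_def using maxdeg_G[OF m] by simp
qed



section \<open>Conversion: general facts\<close>

lemma conv_seq_0: "conv_seq V E S 0 = S" by (simp add: conv_seq_def)
lemma conv_seq_Suc: "conv_seq V E S (Suc t) = conv_step V E (conv_seq V E S t)"
  by (simp add: conv_seq_def)

lemma conv_seq_sub: "S \<subseteq> V \<Longrightarrow> conv_seq V E S t \<subseteq> V"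
  by (induction t) (auto simp: conv_seq_0 conv_seq_Suc conv_step_def)

lemma conv_seq_mono1: "conv_seq V E S t \<subseteq> conv_seq V E S (Suc t)"
  by (simp add: conv_seq_Suc conv_step_def)

lemma conv_seq_S: "S \<subseteq> conv_seq V E S t"
  by (induction t) (auto simp: conv_seq_0 conv_seq_Suc conv_step_def)

definition closed_set :: "'a set \<Rightarrow> 'a set set \<Rightarrow> 'a set \<Rightarrow> bool" where
  "closed_set V E R \<longleftrightarrow> (\<forall>v\<in>V. 2 \<le> card {u\<in>R. adj E u v} \<longrightarrow> v \<in> R)"

lemma closure_conv:
  assumes fin: "finite V" and SV: "S \<subseteq> V"
    and cl: "\<And>R. S \<subseteq> R \<Longrightarrow> R \<subseteq> V \<Longrightarrow> closed_set V E R \<Longrightarrow> V \<subseteq> R"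
  shows "is_2_conversion_set V E S"
proof -
  let ?A = "conv_seq V E S"
  have "\<exists>t. ?A (Suc t) = ?A t"
  proof (rule ccontr)
    assume "\<not> (\<exists>t. ?A (Suc t) = ?A t)"
    then have ps: "?A t \<subset> ?A (Suc t)" for t using conv_seq_mono1[of V E S t] by auto
    have "t \<le> card (?A t)" for t
    proof (induction t)
      case 0 then show ?case by simp
    next
      case (Suc t)
      have "card (?A t) < card (?A (Suc t))"
        by (rule psubset_card_mono[OF finite_subset[OF conv_seq_sub[OF SV] fin] ps])
      then show ?case using Suc by simp
    qed
    moreover have "card (?A t) \<le> card V" for t by (rule card_mono[OF fin conv_seq_sub[OF SV]])
    ultimately show False by (metis Suc_n_not_le_n le_trans)
  qed
  then obtain t where t: "?A (Suc t) = ?A t" by blast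
  have "closed_set V E (?A t)"
    unfolding closed_set_def
  proof (intro ballI impI)
    fix v assume "v \<in> V" "2 \<le> card {u \<in> ?A t. adj E u v}"
    then have "v \<in> ?A (Suc t)" by (simp add: conv_seq_Suc conv_step_def)
    then show "v \<in> ?A t" using t by simp
  qed
  then have "V \<subseteq> ?A t" using cl[OF conv_seq_S conv_seq_sub[OF SV]] by blast
  then have "?A t = V" using conv_seq_sub[OF SV] by blast
  then show ?thesis unfolding is_2_conversion_set_def using SV by blast
qed

lemma closed_two:
  assumes "closed_set V E R" "finite R" "v \<in> V" "a \<in> R" "b \<in> R" "a \<noteq> b" "adj E a v" "adj E b v"
  shows "v \<in> R"
proof -
  have "{a,b} \<subseteq> {u\<in>R. adj E u v}" using assms by auto
  then have "card {a,b} \<le> card {u\<in>R. adj E u v}" by (rule card_mono[rotated]) (use assms(2) in simp)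
  then have "2 \<le> card {u\<in>R. adj E u v}" using assms(6) by simp
  then show ?thesis using assms(1,3) unfolding closed_set_def by blast
qed

lemma stuck:
  assumes SV: "S \<subseteq> V" and fin: "finite V" and ZS: "Z \<inter> S = {}"
    and P: "\<forall>v\<in>Z. card ({u\<in>V. adj E u v} - Z) \<le> 1"
  shows "conv_seq V E S t \<inter> Z = {}"
proof (induction t)
  case 0 then show ?case using ZS by (auto simp: conv_seq_0)
next
  case (Suc t)
  let ?A = "conv_seq V E S t"
  have AV: "?A \<subseteq> V" by (rule conv_seq_sub[OF SV])
  show ?case
  proof (rule ccontr)
    assume "conv_seq V E S (Suc t) \<inter> Z \<noteq> {}"
    then obtain v where vZ: "v \<in> Z" and "v \<in> conv_step V E ?A" by (auto simp: conv_seq_Suc)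
    then have c2: "2 \<le> card {u\<in>?A. adj E u v}" using Suc by (auto simp: conv_step_def)
    have "{u\<in>?A. adj E u v} \<subseteq> {u\<in>V. adj E u v} - Z" using AV Suc by auto
    then have "card {u\<in>?A. adj E u v} \<le> card ({u\<in>V. adj E u v} - Z)"
      by (rule card_mono[rotated]) (use fin in simp)
    then show False using c2 P vZ by fastforce
  qed
qed

lemma hit:
  assumes conv: "is_2_conversion_set V E S" and fin: "finite V" and ZV: "Z \<subseteq> V" and Zne: "Z \<noteq> {}"
    and P: "\<forall>v\<in>Z. card ({u\<in>V. adj E u v} - Z) \<le> 1"
  shows "Z \<inter> S \<noteq> {}"
proof
  assume ZS: "Z \<inter> S = {}"
  from conv obtain t where SV: "S \<subseteq> V" and t: "conv_seq V E S t = V" unfolding is_2_conversion_set_def by blast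
  have "conv_seq V E S t \<inter> Z = {}" by (rule stuck[OF SV fin ZS P])
  then show False using t ZV Zne by blast
qed

lemma two_in_copy:
  assumes conv: "is_2_conversion_set V E S" and fin: "finite V"
    and Z: "\<And>k. k < (4::nat) \<Longrightarrow> Zs k \<subseteq> V \<and> Zs k \<noteq> {} \<and> Zs k \<subseteq> C \<and> (\<forall>v\<in>Zs k. card ({u\<in>V. adj E u v} - Zs k) \<le> 1)"
    and empty: "Zs 0 \<inter> Zs 1 \<inter> Zs 2 \<inter> Zs 3 = {}"
    and finC: "finite C"
  shows "2 \<le> card (S \<inter> C)"
proof (rule ccontr)
  assume "\<not> 2 \<le> card (S \<inter> C)"
  then have le: "card (S \<inter> C) \<le> Suc 0" by simp
  have ne: "Zs k \<inter> S \<noteq> {}" if k4: "k < 4" for k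
  proof -
    have zk: "Zs k \<subseteq> V" "Zs k \<noteq> {}" "\<forall>v\<in>Zs k. card ({u\<in>V. adj E u v} - Zs k) \<le> 1"
      using Z[OF k4] by auto
    show ?thesis by (rule hit[OF conv fin zk(1) zk(2) zk(3)])
  qed
  define x where "x k = (SOME y. y \<in> Zs k \<inter> S)" for k
  have x: "x k \<in> Zs k \<inter> S" if "k < 4" for k
    unfolding x_def using ne[OF that] by (metis ex_in_conv someI_ex)
  have xC: "x k \<in> S \<inter> C" if "k < 4" for k using x[OF that] Z[OF that] by blast
  have eq: "x k = x 0" if "k < 4" for k
  proof -
    have f: "finite (S \<inter> C)" using finC by simp
    have "\<forall>a\<in>S \<inter> C. \<forall>b\<in>S \<inter> C. a = b" using le card_le_Suc0_iff_eq[OF f] by blast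
    then show ?thesis using xC[OF that] xC[of 0] by simp
  qed
  have "x 0 \<in> Zs 0 \<inter> Zs 1 \<inter> Zs 2 \<inter> Zs 3"
    using x[of 0] x[of 1] x[of 2] x[of 3] eq[of 1] eq[of 2] eq[of 3] by auto
  then show False using empty by blast
qed

lemma Z0_0: assumes "2 \<le> m" shows "\<forall>v\<in>{(0,2),(0,3),(0,6),(0,5)}. card ({u\<in>GV m. adj (GE m) u v} - {(0,2),(0,3),(0,6),(0,5)}) \<le> 1"
proof -
  have h2: "card ({u\<in>GV m. adj (GE m) u (0,2)} - {(0,2),(0,3),(0,6),(0,5)}) \<le> 1"
    unfolding nb0_2[OF assms] using assms by (simp add: next_port_def)
  have h3: "card ({u\<in>GV m. adj (GE m) u (0,3)} - {(0,2),(0,3),(0,6),(0,5)}) \<le> 1"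
    unfolding nb0_3[OF assms] using assms by (simp add: next_port_def)
  have h6: "card ({u\<in>GV m. adj (GE m) u (0,6)} - {(0,2),(0,3),(0,6),(0,5)}) \<le> 1"
    unfolding nb0_6[OF assms] using assms by (simp add: next_port_def)
  have h5: "card ({u\<in>GV m. adj (GE m) u (0,5)} - {(0,2),(0,3),(0,6),(0,5)}) \<le> 1"
    unfolding nb0_5[OF assms] using assms by (simp add: next_port_def)
  show ?thesis unfolding ball_simps using h2 h3 h6 h5 by blast
qed

lemma Z0_1: assumes "2 \<le> m" shows "\<forall>v\<in>{(0,3),(0,4),(0,7),(0,6)}. card ({u\<in>GV m. adj (GE m) u v} - {(0,3),(0,4),(0,7),(0,6)}) \<le> 1"
proof -
  have h3: "card ({u\<in>GV m. adj (GE m) u (0,3)} - {(0,3),(0,4),(0,7),(0,6)}) \<le> 1"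
    unfolding nb0_3[OF assms] using assms by (simp add: next_port_def)
  have h4: "card ({u\<in>GV m. adj (GE m) u (0,4)} - {(0,3),(0,4),(0,7),(0,6)}) \<le> 1"
    unfolding nb0_4[OF assms] using assms by (simp add: next_port_def)
  have h7: "card ({u\<in>GV m. adj (GE m) u (0,7)} - {(0,3),(0,4),(0,7),(0,6)}) \<le> 1"
    unfolding nb0_7[OF assms] using assms by (simp add: next_port_def)
  have h6: "card ({u\<in>GV m. adj (GE m) u (0,6)} - {(0,3),(0,4),(0,7),(0,6)}) \<le> 1"
    unfolding nb0_6[OF assms] using assms by (simp add: next_port_def)
  show ?thesis unfolding ball_simps using h3 h4 h7 h6 by blast
qed

lemma Z0_2: assumes "2 \<le> m" shows "\<forall>v\<in>{(0,1),(0,2),(0,3),(0,4),(0,7)}. card ({u\<in>GV m. adj (GE m) u v} - {(0,1),(0,2),(0,3),(0,4),(0,7)}) \<le> 1"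
proof -
  have h1: "card ({u\<in>GV m. adj (GE m) u (0,1)} - {(0,1),(0,2),(0,3),(0,4),(0,7)}) \<le> 1"
    unfolding nb0_1[OF assms] using assms by (simp add: next_port_def)
  have h2: "card ({u\<in>GV m. adj (GE m) u (0,2)} - {(0,1),(0,2),(0,3),(0,4),(0,7)}) \<le> 1"
    unfolding nb0_2[OF assms] using assms by (simp add: next_port_def)
  have h3: "card ({u\<in>GV m. adj (GE m) u (0,3)} - {(0,1),(0,2),(0,3),(0,4),(0,7)}) \<le> 1"
    unfolding nb0_3[OF assms] using assms by (simp add: next_port_def)
  have h4: "card ({u\<in>GV m. adj (GE m) u (0,4)} - {(0,1),(0,2),(0,3),(0,4),(0,7)}) \<le> 1"
    unfolding nb0_4[OF assms] using assms by (simp add: next_port_def)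
  have h7: "card ({u\<in>GV m. adj (GE m) u (0,7)} - {(0,1),(0,2),(0,3),(0,4),(0,7)}) \<le> 1"
    unfolding nb0_7[OF assms] using assms by (simp add: next_port_def)
  show ?thesis unfolding ball_simps using h1 h2 h3 h4 h7 by blast
qed

lemma Z0_3: assumes "2 \<le> m" shows "\<forall>v\<in>{(0,4),(0,5),(0,6),(0,7)}. card ({u\<in>GV m. adj (GE m) u v} - {(0,4),(0,5),(0,6),(0,7)}) \<le> 1"
proof -
  have h4: "card ({u\<in>GV m. adj (GE m) u (0,4)} - {(0,4),(0,5),(0,6),(0,7)}) \<le> 1"
    unfolding nb0_4[OF assms] using assms by (simp add: next_port_def)
  have h5: "card ({u\<in>GV m. adj (GE m) u (0,5)} - {(0,4),(0,5),(0,6),(0,7)}) \<le> 1"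
    unfolding nb0_5[OF assms] using assms by (simp add: next_port_def)
  have h6: "card ({u\<in>GV m. adj (GE m) u (0,6)} - {(0,4),(0,5),(0,6),(0,7)}) \<le> 1"
    unfolding nb0_6[OF assms] using assms by (simp add: next_port_def)
  have h7: "card ({u\<in>GV m. adj (GE m) u (0,7)} - {(0,4),(0,5),(0,6),(0,7)}) \<le> 1"
    unfolding nb0_7[OF assms] using assms by (simp add: next_port_def)
  show ?thesis unfolding ball_simps using h4 h5 h6 h7 by blast
qed

lemma Zl_0: assumes "2 \<le> m" shows "\<forall>v\<in>{(m-1,2),(m-1,3),(m-1,6),(m-1,5)}. card ({u\<in>GV m. adj (GE m) u v} - {(m-1,2),(m-1,3),(m-1,6),(m-1,5)}) \<le> 1"
proof -
  have h2: "card ({u\<in>GV m. adj (GE m) u (m-1,2)} - {(m-1,2),(m-1,3),(m-1,6),(m-1,5)}) \<le> 1"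
    unfolding nbl_2[OF assms] using assms by (simp add: next_port_def)
  have h3: "card ({u\<in>GV m. adj (GE m) u (m-1,3)} - {(m-1,2),(m-1,3),(m-1,6),(m-1,5)}) \<le> 1"
    unfolding nbl_3[OF assms] using assms by (simp add: next_port_def)
  have h6: "card ({u\<in>GV m. adj (GE m) u (m-1,6)} - {(m-1,2),(m-1,3),(m-1,6),(m-1,5)}) \<le> 1"
    unfolding nbl_6[OF assms] using assms by (simp add: next_port_def)
  have h5: "card ({u\<in>GV m. adj (GE m) u (m-1,5)} - {(m-1,2),(m-1,3),(m-1,6),(m-1,5)}) \<le> 1"
    unfolding nbl_5[OF assms] using assms by (simp add: next_port_def)
  show ?thesis unfolding ball_simps using h2 h3 h6 h5 by blast
qed

lemma Zl_1: assumes "2 \<le> m" shows "\<forall>v\<in>{(m-1,3),(m-1,4),(m-1,7),(m-1,6)}. card ({u\<in>GV m. adj (GE m) u v} - {(m-1,3),(m-1,4),(m-1,7),(m-1,6)}) \<le> 1"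
proof -
  have h3: "card ({u\<in>GV m. adj (GE m) u (m-1,3)} - {(m-1,3),(m-1,4),(m-1,7),(m-1,6)}) \<le> 1"
    unfolding nbl_3[OF assms] using assms by (simp add: next_port_def)
  have h4: "card ({u\<in>GV m. adj (GE m) u (m-1,4)} - {(m-1,3),(m-1,4),(m-1,7),(m-1,6)}) \<le> 1"
    unfolding nbl_4[OF assms] using assms by (simp add: next_port_def)
  have h7: "card ({u\<in>GV m. adj (GE m) u (m-1,7)} - {(m-1,3),(m-1,4),(m-1,7),(m-1,6)}) \<le> 1"
    unfolding nbl_7[OF assms] using assms by (simp add: next_port_def)
  have h6: "card ({u\<in>GV m. adj (GE m) u (m-1,6)} - {(m-1,3),(m-1,4),(m-1,7),(m-1,6)}) \<le> 1"
    unfolding nbl_6[OF assms] using assms by (simp add: next_port_def)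
  show ?thesis unfolding ball_simps using h3 h4 h7 h6 by blast
qed

lemma Zl_2: assumes "2 \<le> m" shows "\<forall>v\<in>{(m-1,1),(m-1,2),(m-1,3),(m-1,4),(m-1,7)}. card ({u\<in>GV m. adj (GE m) u v} - {(m-1,1),(m-1,2),(m-1,3),(m-1,4),(m-1,7)}) \<le> 1"
proof -
  have h1: "card ({u\<in>GV m. adj (GE m) u (m-1,1)} - {(m-1,1),(m-1,2),(m-1,3),(m-1,4),(m-1,7)}) \<le> 1"
    unfolding nbl_1[OF assms] using assms by (simp add: next_port_def)
  have h2: "card ({u\<in>GV m. adj (GE m) u (m-1,2)} - {(m-1,1),(m-1,2),(m-1,3),(m-1,4),(m-1,7)}) \<le> 1"
    unfolding nbl_2[OF assms] using assms by (simp add: next_port_def)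
  have h3: "card ({u\<in>GV m. adj (GE m) u (m-1,3)} - {(m-1,1),(m-1,2),(m-1,3),(m-1,4),(m-1,7)}) \<le> 1"
    unfolding nbl_3[OF assms] using assms by (simp add: next_port_def)
  have h4: "card ({u\<in>GV m. adj (GE m) u (m-1,4)} - {(m-1,1),(m-1,2),(m-1,3),(m-1,4),(m-1,7)}) \<le> 1"
    unfolding nbl_4[OF assms] using assms by (simp add: next_port_def)
  have h7: "card ({u\<in>GV m. adj (GE m) u (m-1,7)} - {(m-1,1),(m-1,2),(m-1,3),(m-1,4),(m-1,7)}) \<le> 1"
    unfolding nbl_7[OF assms] using assms by (simp add: next_port_def)
  show ?thesis unfolding ball_simps using h1 h2 h3 h4 h7 by blast
qed

lemma Zl_3: assumes "2 \<le> m" shows "\<forall>v\<in>{(m-1,4),(m-1,5),(m-1,6),(m-1,7)}. card ({u\<in>GV m. adj (GE m) u v} - {(m-1,4),(m-1,5),(m-1,6),(m-1,7)}) \<le> 1"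
proof -
  have h4: "card ({u\<in>GV m. adj (GE m) u (m-1,4)} - {(m-1,4),(m-1,5),(m-1,6),(m-1,7)}) \<le> 1"
    unfolding nbl_4[OF assms] using assms by (simp add: next_port_def)
  have h5: "card ({u\<in>GV m. adj (GE m) u (m-1,5)} - {(m-1,4),(m-1,5),(m-1,6),(m-1,7)}) \<le> 1"
    unfolding nbl_5[OF assms] using assms by (simp add: next_port_def)
  have h6: "card ({u\<in>GV m. adj (GE m) u (m-1,6)} - {(m-1,4),(m-1,5),(m-1,6),(m-1,7)}) \<le> 1"
    unfolding nbl_6[OF assms] using assms by (simp add: next_port_def)
  have h7: "card ({u\<in>GV m. adj (GE m) u (m-1,7)} - {(m-1,4),(m-1,5),(m-1,6),(m-1,7)}) \<le> 1"
    unfolding nbl_7[OF assms] using assms by (simp add: next_port_def)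
  show ?thesis unfolding ball_simps using h4 h5 h6 h7 by blast
qed

lemma Zi_0: assumes "0 < i" "i < m - 1" shows "\<forall>v\<in>{(i,3),(i,4),(i,5),(i,6)}. card ({u\<in>GV m. adj (GE m) u v} - {(i,3),(i,4),(i,5),(i,6)}) \<le> 1"
proof -
  have h3: "card ({u\<in>GV m. adj (GE m) u (i,3)} - {(i,3),(i,4),(i,5),(i,6)}) \<le> 1"
    unfolding nbi_3[OF assms] using assms by (simp add: next_port_def)
  have h4: "card ({u\<in>GV m. adj (GE m) u (i,4)} - {(i,3),(i,4),(i,5),(i,6)}) \<le> 1"
    unfolding nbi_4[OF assms] using assms by (simp add: next_port_def)
  have h5: "card ({u\<in>GV m. adj (GE m) u (i,5)} - {(i,3),(i,4),(i,5),(i,6)}) \<le> 1"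
    unfolding nbi_5[OF assms] using assms by (simp add: next_port_def)
  have h6: "card ({u\<in>GV m. adj (GE m) u (i,6)} - {(i,3),(i,4),(i,5),(i,6)}) \<le> 1"
    unfolding nbi_6[OF assms] using assms by (simp add: next_port_def)
  show ?thesis unfolding ball_simps using h3 h4 h5 h6 by blast
qed

lemma Zi_1: assumes "0 < i" "i < m - 1" shows "\<forall>v\<in>{(i,1),(i,2),(i,5),(i,6)}. card ({u\<in>GV m. adj (GE m) u v} - {(i,1),(i,2),(i,5),(i,6)}) \<le> 1"
proof -
  have h1: "card ({u\<in>GV m. adj (GE m) u (i,1)} - {(i,1),(i,2),(i,5),(i,6)}) \<le> 1"
    unfolding nbi_1[OF assms] using assms by (simp add: next_port_def)
  have h2: "card ({u\<in>GV m. adj (GE m) u (i,2)} - {(i,1),(i,2),(i,5),(i,6)}) \<le> 1"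
    unfolding nbi_2[OF assms] using assms by (simp add: next_port_def)
  have h5: "card ({u\<in>GV m. adj (GE m) u (i,5)} - {(i,1),(i,2),(i,5),(i,6)}) \<le> 1"
    unfolding nbi_5[OF assms] using assms by (simp add: next_port_def)
  have h6: "card ({u\<in>GV m. adj (GE m) u (i,6)} - {(i,1),(i,2),(i,5),(i,6)}) \<le> 1"
    unfolding nbi_6[OF assms] using assms by (simp add: next_port_def)
  show ?thesis unfolding ball_simps using h1 h2 h5 h6 by blast
qed

lemma Zi_2: assumes "0 < i" "i < m - 1" shows "\<forall>v\<in>{(i,1),(i,2),(i,3),(i,6)}. card ({u\<in>GV m. adj (GE m) u v} - {(i,1),(i,2),(i,3),(i,6)}) \<le> 1"
proof -
  have h1: "card ({u\<in>GV m. adj (GE m) u (i,1)} - {(i,1),(i,2),(i,3),(i,6)}) \<le> 1"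
    unfolding nbi_1[OF assms] using assms by (simp add: next_port_def)
  have h2: "card ({u\<in>GV m. adj (GE m) u (i,2)} - {(i,1),(i,2),(i,3),(i,6)}) \<le> 1"
    unfolding nbi_2[OF assms] using assms by (simp add: next_port_def)
  have h3: "card ({u\<in>GV m. adj (GE m) u (i,3)} - {(i,1),(i,2),(i,3),(i,6)}) \<le> 1"
    unfolding nbi_3[OF assms] using assms by (simp add: next_port_def)
  have h6: "card ({u\<in>GV m. adj (GE m) u (i,6)} - {(i,1),(i,2),(i,3),(i,6)}) \<le> 1"
    unfolding nbi_6[OF assms] using assms by (simp add: next_port_def)
  show ?thesis unfolding ball_simps using h1 h2 h3 h6 by blast
qed

lemma Zi_3: assumes "0 < i" "i < m - 1" shows "\<forall>v\<in>{(i,2),(i,3),(i,4),(i,5)}. card ({u\<in>GV m. adj (GE m) u v} - {(i,2),(i,3),(i,4),(i,5)}) \<le> 1"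
proof -
  have h2: "card ({u\<in>GV m. adj (GE m) u (i,2)} - {(i,2),(i,3),(i,4),(i,5)}) \<le> 1"
    unfolding nbi_2[OF assms] using assms by (simp add: next_port_def)
  have h3: "card ({u\<in>GV m. adj (GE m) u (i,3)} - {(i,2),(i,3),(i,4),(i,5)}) \<le> 1"
    unfolding nbi_3[OF assms] using assms by (simp add: next_port_def)
  have h4: "card ({u\<in>GV m. adj (GE m) u (i,4)} - {(i,2),(i,3),(i,4),(i,5)}) \<le> 1"
    unfolding nbi_4[OF assms] using assms by (simp add: next_port_def)
  have h5: "card ({u\<in>GV m. adj (GE m) u (i,5)} - {(i,2),(i,3),(i,4),(i,5)}) \<le> 1"
    unfolding nbi_5[OF assms] using assms by (simp add: next_port_def)
  show ?thesis unfolding ball_simps using h2 h3 h4 h5 by blast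
qed


lemma two_in_copy4:
  assumes conv: "is_2_conversion_set V E S" and fin: "finite V" and finC: "finite C"
    and z0: "Z0 \<subseteq> V" "Z0 \<noteq> {}" "Z0 \<subseteq> C" "\<forall>v\<in>Z0. card ({u\<in>V. adj E u v} - Z0) \<le> 1"
    and z1: "Z1 \<subseteq> V" "Z1 \<noteq> {}" "Z1 \<subseteq> C" "\<forall>v\<in>Z1. card ({u\<in>V. adj E u v} - Z1) \<le> 1"
    and z2: "Z2 \<subseteq> V" "Z2 \<noteq> {}" "Z2 \<subseteq> C" "\<forall>v\<in>Z2. card ({u\<in>V. adj E u v} - Z2) \<le> 1"
    and z3: "Z3 \<subseteq> V" "Z3 \<noteq> {}" "Z3 \<subseteq> C" "\<forall>v\<in>Z3. card ({u\<in>V. adj E u v} - Z3) \<le> 1"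
    and empty: "Z0 \<inter> Z1 \<inter> Z2 \<inter> Z3 = {}"
  shows "2 \<le> card (S \<inter> C)"
proof -
  define Zs where "Zs k = (if k = 0 then Z0 else if k = 1 then Z1 else if k = (2::nat) then Z2 else Z3)" for k
  show ?thesis
  proof (rule two_in_copy[OF conv fin, of Zs])
    fix k :: nat assume "k < 4"
    then have "k = 0 \<or> k = 1 \<or> k = 2 \<or> k = 3" by auto
    then show "Zs k \<subseteq> V \<and> Zs k \<noteq> {} \<and> Zs k \<subseteq> C \<and> (\<forall>v\<in>Zs k. card ({u \<in> V. adj E u v} - Zs k) \<le> 1)"
      unfolding Zs_def using z0 z1 z2 z3 by auto
  next
    show "Zs 0 \<inter> Zs 1 \<inter> Zs 2 \<inter> Zs 3 = {}" unfolding Zs_def using empty by simp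
  qed (rule finC)
qed

definition Cp :: "nat \<Rightarrow> nat \<Rightarrow> (nat \<times> nat) set" where
  "Cp m i = {i} \<times> {1..copy_size m i}"

lemma copy_lower:
  assumes m: "2 \<le> m" and conv: "is_2_conversion_set (GV m) (GE m) S" and i: "i < m"
  shows "2 \<le> card (S \<inter> Cp m i)"
proof -
  have fin: "finite (GV m)" by (rule finite_GV)
  have finC: "finite (Cp m i)" by (simp add: Cp_def)
  consider "i = 0" | "i = m - 1" | "0 < i" "i < m - 1" using i by linarith
  then show ?thesis
  proof cases
    case 1
    show ?thesis unfolding 1
      by (rule two_in_copy4[OF conv fin finC[unfolded 1] _ _ _ Z0_0[OF m] _ _ _ Z0_1[OF m] _ _ _ Z0_2[OF m] _ _ _ Z0_3[OF m]])
         (use m in \<open>auto simp: GV_mem Cp_def copy_size_def\<close>)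
  next
    case 2
    show ?thesis unfolding 2
      by (rule two_in_copy4[OF conv fin finC[unfolded 2] _ _ _ Zl_0[OF m] _ _ _ Zl_1[OF m] _ _ _ Zl_2[OF m] _ _ _ Zl_3[OF m]])
         (use m in \<open>auto simp: GV_mem Cp_def copy_size_def\<close>)
  next
    case 3
    show ?thesis
      by (rule two_in_copy4[OF conv fin finC _ _ _ Zi_0[OF 3] _ _ _ Zi_1[OF 3] _ _ _ Zi_2[OF 3] _ _ _ Zi_3[OF 3]])
         (use 3 in \<open>auto simp: GV_mem Cp_def copy_size_def\<close>)
  qed
qed

lemma lower:
  assumes m: "2 \<le> m" and conv: "is_2_conversion_set (GV m) (GE m) S"
  shows "2 * m \<le> card S"
proof -
  have SV: "S \<subseteq> GV m" using conv unfolding is_2_conversion_set_def by blast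
  have GVU: "GV m = (\<Union>i\<in>{..<m}. Cp m i)" by (auto simp: GV_def Cp_def)
  have SU: "S = (\<Union>i\<in>{..<m}. S \<inter> Cp m i)" using SV unfolding GVU by blast
  have "card S = (\<Sum>i<m. card (S \<inter> Cp m i))"
    by (subst SU, rule card_UN_disjoint) (auto simp: Cp_def)
  also have "\<dots> \<ge> (\<Sum>i<m. 2)" by (rule sum_mono) (use copy_lower[OF m conv] in simp)
  finally show ?thesis by simp
qed


definition S0 :: "nat \<Rightarrow> (nat \<times> nat) set" where
  "S0 m = (SIGMA i:{..<m}. {2, if copy_size m i = 7 then 6 else 5})"

lemma card_S0: "card (S0 m) = 2 * m"
proof -
  have "card (S0 m) = (\<Sum>i<m. card {2::nat, if copy_size m i = 7 then 6 else 5})"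
    unfolding S0_def by (rule card_SigmaI) auto
  also have "\<dots> = (\<Sum>i<m. 2)" by (rule sum.cong) auto
  finally show ?thesis by simp
qed

lemma S0_sub: "S0 m \<subseteq> GV m"
  unfolding S0_def by (auto simp: GV_mem copy_size_def)

lemma step_G:
  assumes "closed_set (GV m) (GE m) R" "R \<subseteq> GV m" "v \<in> GV m" "a \<in> R" "b \<in> R" "a \<noteq> b"
    "adj (GE m) a v" "adj (GE m) b v"
  shows "v \<in> R"
  by (rule closed_two[OF assms(1) finite_subset[OF assms(2) finite_GV] assms(3-8)])

lemma csl': "2 \<le> m \<Longrightarrow> copy_size m (m - Suc 0) = 7" by (simp add: copy_size_def)

lemma copy0_R:
  assumes m: "2 \<le> m" and S: "S0 m \<subseteq> R" and RV: "R \<subseteq> GV m" and cl: "closed_set (GV m) (GE m) R"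
  shows "\<forall>j. (0,j) \<in> GV m \<longrightarrow> (0,j) \<in> R"
proof -
  have m0: "0 < m" using m by simp
  note simps = GV_mem adj_GE cs0[OF m] LE7 L7_def m m0
  have s2: "(0,2) \<in> R" using S m unfolding S0_def by (auto simp: cs0)
  have s6: "(0,6) \<in> R" using S m unfolding S0_def by (auto simp: cs0)
  have s3: "(0,3) \<in> R" by (rule step_G[OF cl RV _ s2 s6]) (simp_all add: simps)
  have s5: "(0,5) \<in> R" by (rule step_G[OF cl RV _ s2 s6]) (simp_all add: simps)
  have s4: "(0,4) \<in> R" by (rule step_G[OF cl RV _ s3 s5]) (simp_all add: simps)
  have s7: "(0,7) \<in> R" by (rule step_G[OF cl RV _ s6 s4]) (simp_all add: simps)
  have s1: "(0,1) \<in> R" by (rule step_G[OF cl RV _ s2 s7]) (simp_all add: simps)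
  show ?thesis
  proof (intro allI impI)
    fix j assume "(0,j) \<in> GV m"
    then have "1 \<le> j" "j \<le> 7" by (auto simp: GV_mem cs0[OF m])
    then show "(0,j) \<in> R" using j7 s1 s2 s3 s4 s5 s6 s7 by blast
  qed
qed

lemma copyl_R:
  assumes m: "2 \<le> m" and S: "S0 m \<subseteq> R" and RV: "R \<subseteq> GV m" and cl: "closed_set (GV m) (GE m) R"
  shows "\<forall>j. (m-1,j) \<in> GV m \<longrightarrow> (m-1,j) \<in> R"
proof -
  have m0: "0 < m" "m - 1 < m" "m - Suc 0 < m" using m by simp_all
  note simps = GV_mem adj_GE csl[OF m] csl'[OF m] LE7 L7_def m m0
  have s2: "(m-1,2) \<in> R" using S m unfolding S0_def by (auto simp: csl csl')
  have s6: "(m-1,6) \<in> R" using S m unfolding S0_def by (auto simp: csl csl')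
  have s3: "(m-1,3) \<in> R" by (rule step_G[OF cl RV _ s2 s6]) (simp_all add: simps)
  have s5: "(m-1,5) \<in> R" by (rule step_G[OF cl RV _ s2 s6]) (simp_all add: simps)
  have s4: "(m-1,4) \<in> R" by (rule step_G[OF cl RV _ s3 s5]) (simp_all add: simps)
  have s7: "(m-1,7) \<in> R" by (rule step_G[OF cl RV _ s6 s4]) (simp_all add: simps)
  have s1: "(m-1,1) \<in> R" by (rule step_G[OF cl RV _ s2 s7]) (simp_all add: simps)
  show ?thesis
  proof (intro allI impI)
    fix j assume "(m-1,j) \<in> GV m"
    then have "1 \<le> j" "j \<le> 7" by (auto simp: GV_mem csl[OF m] csl'[OF m])
    then show "(m-1,j) \<in> R" using j7 s1 s2 s3 s4 s5 s6 s7 by blast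
  qed
qed

lemma copyi_R:
  assumes i: "0 < i" "i < m - 1" and S: "S0 m \<subseteq> R" and RV: "R \<subseteq> GV m" and cl: "closed_set (GV m) (GE m) R"
    and prev: "(i-1, next_port (i-1)) \<in> R"
  shows "\<forall>j. (i,j) \<in> GV m \<longrightarrow> (i,j) \<in> R"
proof -
  have ne: "i \<noteq> i - Suc 0" "i - 1 \<noteq> i" "i = Suc (i - 1)" "i = Suc (i - Suc 0)" using i by simp_all
  have im: "i < m" using i by linarith
  note simps = GV_mem adj_GE csi[OF i] LE6 L6_def i im
  have s2: "(i,2) \<in> R" using S i unfolding S0_def by (auto simp: csi)
  have s5: "(i,5) \<in> R" using S i unfolding S0_def by (auto simp: csi)
  have a1: "adj (GE m) (i-1, next_port (i-1)) (i,1)" unfolding adj_GE using i by auto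
  have a2: "adj (GE m) (i,2) (i,1)" using i by (simp add: simps)
  have neq: "(i,2) \<noteq> (i-1, next_port (i-1))"
  proof
    assume "(i,2) = (i-1, next_port (i-1))"
    then have "i = i - 1" by (rule Pair_inject) 
    then show False using i(1) by linarith
  qed
  have v1: "(i,1) \<in> GV m" using i by (simp add: simps)
  have s1: "(i,1) \<in> R" by (rule step_G[OF cl RV v1 s2 prev neq a2 a1])
  have s6: "(i,6) \<in> R" by (rule step_G[OF cl RV _ s1 s5]) (simp_all add: simps)
  have s3: "(i,3) \<in> R" by (rule step_G[OF cl RV _ s2 s6]) (simp_all add: simps)
  have s4: "(i,4) \<in> R" by (rule step_G[OF cl RV _ s3 s5]) (simp_all add: simps)
  show ?thesis
  proof (intro allI impI)
    fix j assume "(i,j) \<in> GV m"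
    then have "1 \<le> j" "j \<le> 6" by (auto simp: GV_mem csi[OF i])
    then show "(i,j) \<in> R" using j6 s1 s2 s3 s4 s5 s6 by blast
  qed
qed

lemma all_R:
  assumes m: "2 \<le> m" and S: "S0 m \<subseteq> R" and RV: "R \<subseteq> GV m" and cl: "closed_set (GV m) (GE m) R"
  shows "GV m \<subseteq> R"
proof -
  have "\<forall>j. (i,j) \<in> GV m \<longrightarrow> (i,j) \<in> R" if "i < m" for i
    using that
  proof (induction i)
    case 0 then show ?case using copy0_R[OF m S RV cl] by blast
  next
    case (Suc i)
    show ?case
    proof (cases "Suc i = m - 1")
      case True then show ?thesis using copyl_R[OF m S RV cl] by simp
    next
      case False
      then have ii: "0 < Suc i" "Suc i < m - 1" using Suc.prems by auto
      have "(i, next_port i) \<in> GV m" using np_le[of i m] Suc.prems by (simp add: GV_mem)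
      then have "(i, next_port i) \<in> R" using Suc.IH Suc.prems by simp
      then show ?thesis using copyi_R[OF ii S RV cl] by simp
    qed
  qed
  then show ?thesis by (auto simp: GV_mem)
qed

lemma S0_conv: assumes m: "2 \<le> m" shows "is_2_conversion_set (GV m) (GE m) (S0 m)"
  by (rule closure_conv[OF finite_GV S0_sub]) (rule all_R[OF m])

lemma c2_G: assumes m: "2 \<le> m" shows "c2 (GV m) (GE m) = 2 * m"
  unfolding c2_def
proof (rule Least_equality)
  show "\<exists>S. is_2_conversion_set (GV m) (GE m) S \<and> card S = 2 * m" using S0_conv[OF m] card_S0 by blast
next
  fix n assume "\<exists>S. is_2_conversion_set (GV m) (GE m) S \<and> card S = n"
  then show "2 * m \<le> n" using lower[OF m] by blast
qed

lemma final_arith: assumes m: "2 \<le> m"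
  shows "int (2 * m) - \<lceil>real (6 * m + 2 + 2) / 4\<rceil> = int (m div 2) - 1"
proof (cases "even m")
  case True
  then obtain k where k: "m = 2 * k" by blast
  have "\<lceil>real (6 * m + 2 + 2) / 4\<rceil> = int (3 * k + 1)"
    by (rule ceiling_unique) (simp_all add: k field_simps)
  then show ?thesis using k by simp
next
  case False
  then obtain k where k: "m = 2 * k + 1" using oddE by blast
  have "\<lceil>real (6 * m + 2 + 2) / 4\<rceil> = int (3 * k + 3)"
    by (rule ceiling_unique) (simp_all add: k field_simps)
  then show ?thesis using k by simp
qed


theorem proposition5p7:
  fixes m :: nat
  assumes "m \<ge> 2"
  shows "simple_graph (GV m) (GE m) \<and> cubic (GV m) (GE m) \<and> bridged (GE m)
           \<and> class2 (GV m) (GE m) \<and> triangle_free (GE m)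
         \<and> int (c2 (GV m) (GE m)) - \<lceil>real (card (GV m) + 2) / 4\<rceil> = int (m div 2) - 1"
proof -
  have m: "2 \<le> m" using assms .
  have e: "int (c2 (GV m) (GE m)) - \<lceil>real (card (GV m) + 2) / 4\<rceil> = int (m div 2) - 1"
    unfolding c2_G[OF m] card_GV[OF m] by (rule final_arith[OF m])
  show ?thesis using simple_G cubic_G[OF m] bridged_G[OF m] class2_G[OF m] tri_free[OF m] e by blast
qed

end
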